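(* Let $n\ge 1$, $t\ge 0$, $\ell\ge 1$ be integers with $n\ge 3t+1$. The protocol COOL described in the context solves Byzantine agreement on $\ell$-bit messages error-free: in every execution, against every adversary (of unbounded computational power, with no cryptographic assumptions whatsoever) controlling at most $t$ processors, it satisfies termination, consistency and validity. Moreover, COOL uses $O(t)$ rounds and a total of $O(\max\{n\ell,\ nt\log t\})$ communicated bits. (Thus it has resilience $n\ge 3t+1$, round complexity $O(t)$, and communication complexity $O(n\ell)$ whenever $\ell\ge t\log t$.)
   Context: Setting. There are $n$ processors indexed by $[1:n]=\{1,\dots,n\}$; every two are joined by a reliable private channel, communication is synchronous (in rounds), and each recipient knows the sender of every message. At most $t$ processors are dishonest; they are controlled by a Byzantine adversary of unbounded computational power that knows all inputs and may make them deviate arbitrarily (e.g. send different values to different processors, or send nothing; missing values are replaced by a fixed default). The others are honest. Processor $i$ holds an $\ell$-bit initial message $\boldsymbol w_i$. $\phi$ denotes a default value different from every $\ell$-bit message. Logarithms are base 2. Byzantine agreement requirements: termination (every honest processor eventually outputs a message and terminates), consistency (all honest processors output the same message), validity (if all honest processors have the same initial message, they all output it). A protocol is error-free if these hold in every execution. Code. Let $k=\lfloor t/5\rfloor+1$ and $c=\lceil \max\{\ell,(t/5+1)\log(n+1)\}/k\rceil$ (so $n\le 2^c-1$). Every $\ell$-bit message is padded with zeros to $kc$ bits and regarded as a vector in $GF(2^c)^k$. Integers in $[1:n]$ are identified with distinct nonzero elements of $GF(2^c)$ (e.g. via binary representation), and for $i\in[1:n]$ the vector $\boldsymbol h_i\in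 GF(2^c)^k$ has entries $h_{i,j}=\prod_{p\in[1:k],\,p\ne j}\frac{i-p}{j-p}$, $j\in[1:k]$, computed in $GF(2^c)$; so $\boldsymbol h_i^{\mathsf T}\boldsymbol x$ is the value at $i$ of the polynomial of degree $<k$ taking values $x_1,\dots,x_k$ at $1,\dots,k$. Core protocol (run by all $n$ processors; steps of honest processor $i$). Initialization: $\boldsymbol w^{(i)}:=\boldsymbol w_i$ (the "updated message"), $y^{(i)}_j:=\boldsymbol h_j^{\mathsf T}\boldsymbol w_i$ for $j\in[1:n]$, $u_i(i):=1$. Phase 1. (a) Send the pair $(y^{(i)}_j,y^{(i)}_i)$ to each $j\neq i$. (b) For $j\ne i$, set the link indicator $u_i(j):=1$ if the pair received from $j$ equals $(y^{(i)}_i,y^{(i)}_j)$, else $u_i(j):=0$. Set the success indicator $s_i:=1$ if $\sum_{j=1}^n u_i(j)\ge n-t$; otherwise $s_i:=0$ and $\boldsymbol w^{(i)}:=\phi$. (c) Send $s_i$ to all processors; each processor records for every $j$ the indicator received from $j$ (its own for itself) and forms $\mathcal S_1=\{j: s_j=1\}$, $\mathcal S_0=\{j: s_j=0\}$ (views may differ between processors). Phase 2. If $s_i=1$: set $u_i(j):=0$ for all $j\in\mathcal S_0$; if now $\sum_j u_i(j)<n-t$, set $s_i:=0$, $\boldsymbol w^{(i)}:=\phi$ and send $s_i=0$ to all. Every processor overwrites its recorded indicators with newly received ones and recomputes $\mathcal S_0,\mathcal S_1$. Phase 3. Repeat the steps of Phase 2 once more. Then set the vote $v_i:=1$ if the recorded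 indicators satisfy $\sum_{j=1}^n s_j\ge 2t+1$, else $v_i:=0$. All processors run on the votes a deterministic error-free binary Byzantine agreement protocol for $t<n/3$ using $O(nt)$ bits and $O(t)$ rounds (e.g. Berman–Garay–Perry or Coan–Welch), guaranteeing that all honest processors decide, decide equally, and decide the common honest vote if all honest votes agree. If the decision is $0$, processor $i$ sets $\boldsymbol w^{(i)}:=\phi$, outputs $\phi$ and stops. Phase 4 (decision $1$). If $s_i=0$: replace $y^{(i)}_i$ by the most frequent value (fixed tie-breaking) among the first components of the Phase-1 pairs received from processors $j\in\mathcal S_1$; send the new $y^{(i)}_i$ to every $j\in\mathcal S_0\setminus\{i\}$; form $z_1,\dots,z_n$ with $z_i=y^{(i)}_i$, $z_j$ = value received from $j$ in Phase 4 for $j\in\mathcal S_0\setminus\{i\}$, and $z_j$ = second component of the Phase-1 pair from $j$ for $j\in\mathcal S_1$; set $\boldsymbol w^{(i)}$ to a message $\boldsymbol x$ with $\boldsymbol h_j^{\mathsf T}\boldsymbol x=z_j$ for at least $n-t$ indices $j$ (Reed–Solomon decoding correcting up to $t$ errors; $\phi$ if none exists). If $s_i=1$, keep $\boldsymbol w^{(i)}$. Output $\boldsymbol w^{(i)}$ and stop. COOL in general. If $t=\Omega(n)$ (i.e. $n\le Ct$ for a fixed constant $C$), COOL is the core protocol. Otherwise, the processors of $Q=[1:n']$, $n'=3t+1$, run the core protocol among themselves (with $n$ replaced by $n'$ everywhere, in particular in $c$); then each $i\in Q$ sends to every processor outside $Q$ the value $\boldsymbol h_i^{\mathsf T}\boldsymbol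 w^{(i)}$ of its output (a fixed marker if the output is $\phi$), and each processor outside $Q$ outputs the message consistent with the values received from at least $n'-t$ processors of $Q$ (or $\phi$ if at least $n'-t$ markers are received). *)

theory Defs
  imports "HOL-Algebra.Algebra" Complex_Main
begin

definition kval :: "nat \<Rightarrow> nat" where
  "kval t = t div 5 + 1"

definition cval :: "nat \<Rightarrow> nat \<Rightarrow> nat \<Rightarrow> nat" where
  "cval N t l = nat \<lceil>max (real l) ((real t / 5 + 1) * log 2 (real N + 1)) / real (kval t)\<rceil>"

definition pbit :: "bool list \<Rightarrow> nat \<Rightarrow> bool" where
  "pbit m q = (q < length m \<and> m ! q)"

text \<open>Entry j (j in [1:k]) of the vector in GF(2^c)^k associated with the padded
  message m: the j-th block of c bits, read in binary (element of GF(2^c)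
  represented by its binary representation, a natural number below 2^c).\<close>
definition enc :: "nat \<Rightarrow> bool list \<Rightarrow> nat \<Rightarrow> nat" where
  "enc c m j = (\<Sum>b<c. if pbit m ((j - 1) * c + b) then 2 ^ b else 0)"

definition hcoef :: "nat ring \<Rightarrow> nat \<Rightarrow> nat \<Rightarrow> nat \<Rightarrow> nat" where
  "hcoef R k i j = finprod R (\<lambda>p. (i \<ominus>\<^bsub>R\<^esub> p) \<otimes>\<^bsub>R\<^esub> inv\<^bsub>R\<^esub> (j \<ominus>\<^bsub>R\<^esub> p)) ({1..k} - {j})"

definition heval :: "nat ring \<Rightarrow> nat \<Rightarrow> nat \<Rightarrow> (nat \<Rightarrow> nat) \<Rightarrow> nat" where
  "heval R k i x = finsum R (\<lambda>j. hcoef R k i j \<otimes>\<^bsub>R\<^esub> x j) {1..k}"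

definition mostfreq :: "nat set \<Rightarrow> (nat \<Rightarrow> nat) \<Rightarrow> nat" where
  "mostfreq A f = (if A = {} then 0 else
     (LEAST v. v \<in> f ` A \<and> (\<forall>v'\<in>f ` A. card {j\<in>A. f j = v'} \<le> card {j\<in>A. f j = v})))"

definition san :: "nat ring \<Rightarrow> nat \<Rightarrow> nat" where
  "san R v = (if v \<in> carrier R then v else \<zero>\<^bsub>R\<^esub>)"

text \<open>Messages sent by dishonest processors (indexed sender, receiver) in each
  communication step; the adversary of the binary BA sub-protocol is of type 'a.
  Since honest processors are deterministic and the adversary knows all inputs,
  quantifying over all such fixed message assignments covers all adaptive
  strategies.\<close>
record 'a adv =
  a1 :: "nat \<Rightarrow> nat \<Rightarrow> nat \<times> nat"
  b1 :: "nat \<Rightarrow> nat \<Rightarrow> bool"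
  b2 :: "nat \<Rightarrow> nat \<Rightarrow> bool option"       \<comment> \<open>Phase 2 indicators (None = nothing sent)\<close>
  b3 :: "nat \<Rightarrow> nat \<Rightarrow> bool option"
  aBA :: 'a
  a4 :: "nat \<Rightarrow> nat \<Rightarrow> nat"
  a5 :: "nat \<Rightarrow> nat \<Rightarrow> nat option"        \<comment> \<open>final values sent to processors outside Q (None = marker)\<close>

section \<open>Binary Byzantine agreement black box\<close>

text \<open>BA N t D v a = (decisions, rounds, bits sent by honest processors) of the
  binary BA protocol run by processors [1:N] with dishonest set D, votes v and
  adversary behaviour a.\<close>
definition binary_BA ::
  "(nat \<Rightarrow> nat \<Rightarrow> nat set \<Rightarrow> (nat \<Rightarrow> bool) \<Rightarrow> 'a \<Rightarrow> (nat \<Rightarrow> bool) \<times> nat \<times> nat) \<Rightarrow> bool" where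
  "binary_BA BA \<longleftrightarrow> (\<exists>Cb::real. \<forall>N t D v a. 3 * t + 1 \<le> N \<and> D \<subseteq> {1..N} \<and> card D \<le> t \<longrightarrow>
     (case BA N t D v a of (d, r, b) \<Rightarrow>
        (\<forall>i\<in>{1..N} - D. \<forall>j\<in>{1..N} - D. d i = d j) \<and>
        (\<forall>x. (\<forall>i\<in>{1..N} - D. v i = x) \<longrightarrow> (\<forall>i\<in>{1..N} - D. d i = x)) \<and>
        real r \<le> Cb * max 1 (real t) \<and>
        real b \<le> Cb * real N * max 1 (real t)))"

context
  fixes F :: "nat \<Rightarrow> nat ring"
    and BA :: "nat \<Rightarrow> nat \<Rightarrow> nat set \<Rightarrow> (nat \<Rightarrow> bool) \<Rightarrow> 'a \<Rightarrow> (nat \<Rightarrow> bool) \<times> nat \<times> nat"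
    and N t l :: nat
    and w :: "nat \<Rightarrow> bool list"
    and D :: "nat set"
    and A :: "'a adv"
begin

definition "cR = F (cval N t l)"
definition "cPr = {1..N}"

definition cy :: "nat \<Rightarrow> nat \<Rightarrow> nat" where
  "cy i j = heval cR (kval t) j (enc (cval N t l) (w i))"

definition crcv1 :: "nat \<Rightarrow> nat \<Rightarrow> nat \<times> nat" where
  "crcv1 i j = (if j \<in> D then (san cR (fst (a1 A j i)), san cR (snd (a1 A j i)))
               else (cy j i, cy j j))"

definition cu1 :: "nat \<Rightarrow> nat \<Rightarrow> bool" where
  "cu1 i j = (j = i \<or> crcv1 i j = (cy i i, cy i j))"

definition cs1 :: "nat \<Rightarrow> bool" where
  "cs1 i = (N - t \<le> card {j\<in>cPr. cu1 i j})"

definition crec1 :: "nat \<Rightarrow> nat \<Rightarrow> bool" where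
  "crec1 i j = (if j = i then cs1 i else if j \<in> D then b1 A j i else cs1 j)"

definition cu2 :: "nat \<Rightarrow> nat \<Rightarrow> bool" where
  "cu2 i j = (cu1 i j \<and> crec1 i j)"

definition cs2 :: "nat \<Rightarrow> bool" where
  "cs2 i = (cs1 i \<and> N - t \<le> card {j\<in>cPr. cu2 i j})"

definition csnd2 :: "nat \<Rightarrow> bool" where
  "csnd2 i = (cs1 i \<and> \<not> cs2 i)"

definition crec2 :: "nat \<Rightarrow> nat \<Rightarrow> bool" where
  "crec2 i j = (if j = i then cs2 i else
     (case (if j \<in> D then b2 A j i else if csnd2 j then Some False else None) of
        None \<Rightarrow> crec1 i j | Some b \<Rightarrow> b))"

definition cu3 :: "nat \<Rightarrow> nat \<Rightarrow> bool" where
  "cu3 i j = (cu2 i j \<and> crec2 i j)"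

definition cs3 :: "nat \<Rightarrow> bool" where
  "cs3 i = (cs2 i \<and> N - t \<le> card {j\<in>cPr. cu3 i j})"

definition csnd3 :: "nat \<Rightarrow> bool" where
  "csnd3 i = (cs2 i \<and> \<not> cs3 i)"

definition crec3 :: "nat \<Rightarrow> nat \<Rightarrow> bool" where
  "crec3 i j = (if j = i then cs3 i else
     (case (if j \<in> D then b3 A j i else if csnd3 j then Some False else None) of
        None \<Rightarrow> crec2 i j | Some b \<Rightarrow> b))"

definition cvote :: "nat \<Rightarrow> bool" where
  "cvote i = (2 * t + 1 \<le> card {j\<in>cPr. crec3 i j})"

definition "cBA = BA N t D cvote (aBA A)"

definition cdec :: "nat \<Rightarrow> bool" where
  "cdec i = fst cBA i"

definition cnewy :: "nat \<Rightarrow> nat" where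
  "cnewy i = mostfreq {j\<in>cPr. crec3 i j} (\<lambda>j. fst (crcv1 i j))"

definition csnd4 :: "nat \<Rightarrow> nat \<Rightarrow> bool" where
  "csnd4 i j = (cdec i \<and> \<not> cs3 i \<and> j \<noteq> i \<and> \<not> crec3 i j)"

definition crcv4 :: "nat \<Rightarrow> nat \<Rightarrow> nat" where
  "crcv4 i j = (if j \<in> D then san cR (a4 A j i)
                else if csnd4 j i then cnewy j else \<zero>\<^bsub>cR\<^esub>)"

definition cz :: "nat \<Rightarrow> nat \<Rightarrow> nat" where
  "cz i j = (if j = i then cnewy i else if crec3 i j then snd (crcv1 i j) else crcv4 i j)"

definition cdecode :: "(nat \<Rightarrow> nat) \<Rightarrow> bool list option" where
  "cdecode zz = (if \<exists>m. length m = l \<and> N - t \<le> card {j\<in>cPr. heval cR (kval t) j (enc (cval N t l) m) = zz j}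
     then Some (SOME m. length m = l \<and> N - t \<le> card {j\<in>cPr. heval cR (kval t) j (enc (cval N t l) m) = zz j})
     else None)"

text \<open>output of honest processor i (None = phi)\<close>
definition core_out :: "nat \<Rightarrow> bool list option" where
  "core_out i = (if \<not> cdec i then None else if cs3 i then Some (w i) else cdecode (cz i))"

definition core_rounds :: nat where
  "core_rounds = 5 + fst (snd cBA)"

definition core_bits :: nat where
  "core_bits = (\<Sum>i\<in>cPr - D.
       2 * cval N t l * (N - 1) + (N - 1)
     + (if csnd2 i then N - 1 else 0) + (if csnd3 i then N - 1 else 0)
     + cval N t l * card {j\<in>cPr. csnd4 i j})
     + snd (snd cBA)"

end

definition cool_out ::
  "(nat \<Rightarrow> nat ring) \<Rightarrow> real \<Rightarrow> (nat \<Rightarrow> nat \<Rightarrow> nat set \<Rightarrow> (nat \<Rightarrow> bool) \<Rightarrow> 'a \<Rightarrow> (nat \<Rightarrow> bool) \<times> nat \<times> nat)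
   \<Rightarrow> nat \<Rightarrow> nat \<Rightarrow> nat \<Rightarrow> (nat \<Rightarrow> bool list) \<Rightarrow> nat set \<Rightarrow> 'a adv \<Rightarrow> nat \<Rightarrow> bool list option" where
  "cool_out F C0 BA n t l w D A i =
    (if real n \<le> C0 * real t then core_out F BA n t l w D A i
     else
       (let n' = 3 * t + 1; R' = F (cval n' t l); D' = D \<inter> {1..n'} in
        if i \<le> n' then core_out F BA n' t l w D' A i
        else
          (let r = (\<lambda>j. if j \<in> D then map_option (san R') (a5 A j i)
                        else map_option (\<lambda>m. heval R' (kval t) j (enc (cval n' t l) m))
                               (core_out F BA n' t l w D' A j))
           in if \<exists>m. length m = l \<and> n' - t \<le> card {j\<in>{1..n'}. r j = Some (heval R' (kval t) j (enc (cval n' t l) m))}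
              then Some (SOME m. length m = l \<and> n' - t \<le> card {j\<in>{1..n'}. r j = Some (heval R' (kval t) j (enc (cval n' t l) m))})
              else None)))"

definition cool_rounds ::
  "(nat \<Rightarrow> nat ring) \<Rightarrow> real \<Rightarrow> (nat \<Rightarrow> nat \<Rightarrow> nat set \<Rightarrow> (nat \<Rightarrow> bool) \<Rightarrow> 'a \<Rightarrow> (nat \<Rightarrow> bool) \<times> nat \<times> nat)
   \<Rightarrow> nat \<Rightarrow> nat \<Rightarrow> nat \<Rightarrow> (nat \<Rightarrow> bool list) \<Rightarrow> nat set \<Rightarrow> 'a adv \<Rightarrow> nat" where
  "cool_rounds F C0 BA n t l w D A =
    (if real n \<le> C0 * real t then core_rounds F BA n t l w D A
     else core_rounds F BA (3 * t + 1) t l w (D \<inter> {1..3 * t + 1}) A + 1)"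

definition cool_bits ::
  "(nat \<Rightarrow> nat ring) \<Rightarrow> real \<Rightarrow> (nat \<Rightarrow> nat \<Rightarrow> nat set \<Rightarrow> (nat \<Rightarrow> bool) \<Rightarrow> 'a \<Rightarrow> (nat \<Rightarrow> bool) \<times> nat \<times> nat)
   \<Rightarrow> nat \<Rightarrow> nat \<Rightarrow> nat \<Rightarrow> (nat \<Rightarrow> bool list) \<Rightarrow> nat set \<Rightarrow> 'a adv \<Rightarrow> nat" where
  "cool_bits F C0 BA n t l w D A =
    (if real n \<le> C0 * real t then core_bits F BA n t l w D A
     else (let n' = 3 * t + 1 in
       core_bits F BA n' t l w (D \<inter> {1..n'}) A
       + (\<Sum>j\<in>{1..n'} - D. (cval n' t l + 1) * (n - n'))))"

end

theory Submission
  imports Defs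
begin


definition lpoly :: "nat ring \<Rightarrow> nat \<Rightarrow> nat \<Rightarrow> nat list" where
  "lpoly xR k j = finprod (poly_ring xR)
     (\<lambda>q. (X\<^bsub>xR\<^esub> \<ominus>\<^bsub>poly_ring xR\<^esub> ring.poly_of_const xR q) \<otimes>\<^bsub>poly_ring xR\<^esub>
          ring.poly_of_const xR (inv\<^bsub>xR\<^esub> (j \<ominus>\<^bsub>xR\<^esub> q))) ({1..k} - {j})"

definition hpoly :: "nat ring \<Rightarrow> nat \<Rightarrow> (nat \<Rightarrow> nat) \<Rightarrow> nat list" where
  "hpoly xR k x = finsum (poly_ring xR) (\<lambda>j. lpoly xR k j \<otimes>\<^bsub>poly_ring xR\<^esub> ring.poly_of_const xR (x j)) {1..k}"

context
  fixes xR :: "nat ring" (structure)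
  assumes F: "field xR"
begin

interpretation field xR by (rule F)

lemma inv_diff_carrier:
  assumes "a \<in> carrier xR" "b \<in> carrier xR" "a \<noteq> b"
  shows "inv (a \<ominus> b) \<in> carrier xR" "(a \<ominus> b) \<otimes> inv (a \<ominus> b) = \<one>"
proof -
  have "a \<ominus> b \<in> carrier xR - {\<zero>}" using assms
    by (auto simp: r_right_minus_eq)
  then show "inv (a \<ominus> b) \<in> carrier xR" "(a \<ominus> b) \<otimes> inv (a \<ominus> b) = \<one>"
    using field_Units by (auto intro: Units_r_inv)
qed

lemma sub_mem: "{1..k} \<subseteq> carrier xR \<Longrightarrow> 1 \<le> p \<Longrightarrow> p \<le> k \<Longrightarrow> p \<in> carrier xR"
  by auto

lemma hcoef_diag:
  assumes sub: "{1..k} \<subseteq> carrier xR" and j: "j \<in> {1..k}"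
  shows "hcoef xR k j j = \<one>"
proof -
  have "hcoef xR k j j = finprod xR (\<lambda>p. \<one>) ({1..k} - {j})"
    unfolding hcoef_def
    by (rule finprod_cong') (use inv_diff_carrier sub j sub_mem[OF sub] in auto)
  also have "\<dots> = \<one>" by simp
  finally show ?thesis .
qed

lemma hcoef_carrier:
  assumes sub: "{1..k} \<subseteq> carrier xR" and i: "i \<in> carrier xR" and j: "j \<in> {1..k}"
  shows "hcoef xR k i j \<in> carrier xR"
  unfolding hcoef_def
  by (rule finprod_closed) (use sub i j inv_diff_carrier sub_mem[OF sub] in auto)

lemma hcoef_off:
  assumes sub: "{1..k} \<subseteq> carrier xR" and j: "j \<in> {1..k}" and j': "j' \<in> {1..k}"
    and ne: "j \<noteq> j'"
  shows "hcoef xR k j j' = \<zero>"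
proof -
  let ?f = "(\<lambda>p. (j \<ominus> p) \<otimes> inv (j' \<ominus> p))"
  have fc: "?f \<in> {1..k} - {j'} \<rightarrow> carrier xR"
    using sub j j' inv_diff_carrier sub_mem[OF sub] by auto
  have eq: "{1..k} - {j'} = insert j ({1..k} - {j', j})" using j ne j' by auto
  have "hcoef xR k j j' = ?f j \<otimes> finprod xR ?f ({1..k} - {j', j})"
    unfolding hcoef_def eq
    by (rule finprod_insert) (use fc eq in auto)
  also have "?f j = \<zero>"
  proof -
    have jc: "j \<in> carrier xR" "j' \<in> carrier xR" using j j' sub by auto
    have "j \<ominus> j = \<zero>" using jc by simp
    then show ?thesis using inv_diff_carrier[of j' j] jc ne l_null by metis
  qed
  also have "\<zero> \<otimes> finprod xR ?f ({1..k} - {j', j}) = \<zero>"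
    by (rule l_null) (rule finprod_closed, use fc in auto)
  finally show ?thesis .
qed

lemma heval_node:
  assumes sub: "{1..k} \<subseteq> carrier xR" and j: "j \<in> {1..k}"
    and x: "\<forall>j\<in>{1..k}. x j \<in> carrier xR"
  shows "heval xR k j x = x j"
proof -
  have "heval xR k j x = finsum xR (\<lambda>j'. if j = j' then x j' else \<zero>) {1..k}"
    unfolding heval_def
    by (rule finsum_cong') (use hcoef_diag[OF sub j] hcoef_off[OF sub j] x j in auto)
  also have "\<dots> = x j" by (rule finsum_singleton) (use j x in auto)
  finally show ?thesis .
qed

abbreviation "xP \<equiv> poly_ring xR"

interpretation xP: domain xP
  using univ_poly_is_domain[OF carrier_is_subring] .

lemma const_carrier: "c \<in> carrier xR \<Longrightarrow> poly_of_const c \<in> carrier xP"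
  unfolding poly_of_const_def univ_poly_carrier[symmetric] polynomial_def
  by (cases "c = \<zero>") auto

lemma const_degree: "degree (poly_of_const c) = 0"
  unfolding poly_of_const_def by (cases "c = \<zero>") auto

lemma const_eval: "c \<in> carrier xR \<Longrightarrow> eval (poly_of_const c) a = c"
  unfolding poly_of_const_def by (cases "c = \<zero>") auto

lemma X_carrier: "X \<in> carrier xP" using var_closed(1)[OF carrier_is_subring] .

lemma deg_mult: "p \<in> carrier xP \<Longrightarrow> q \<in> carrier xP \<Longrightarrow> degree (p \<otimes>\<^bsub>xP\<^esub> q) \<le> degree p + degree q"
  using poly_mult_degree_eq[OF carrier_is_subring, of p q]
  by (simp add: univ_poly_mult univ_poly_carrier)

lemma deg_add: "degree (p \<oplus>\<^bsub>xP\<^esub> q) \<le> max (degree p) (degree q)"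
  using poly_add_degree[of p q] by (simp add: univ_poly_add)

lemma deg_minus: "p \<in> carrier xP \<Longrightarrow> q \<in> carrier xP \<Longrightarrow> degree (p \<ominus>\<^bsub>xP\<^esub> q) \<le> max (degree p) (degree q)"
  unfolding a_minus_def using deg_add[of p "\<ominus>\<^bsub>xP\<^esub> q"] univ_poly_a_inv_degree[OF carrier_is_subring, where p=q] by simp

lemma eval_hom_cring: "a \<in> carrier xR \<Longrightarrow> ring_hom_cring xP xR (\<lambda>p. eval p a)"
  using eval_cring_hom[OF carrier_is_subring] .

lemma factor_carrier: "q \<in> carrier xR \<Longrightarrow> c \<in> carrier xR \<Longrightarrow>
   (X \<ominus>\<^bsub>xP\<^esub> poly_of_const q) \<otimes>\<^bsub>xP\<^esub> poly_of_const c \<in> carrier xP"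
  using X_carrier const_carrier by auto

lemma factor_degree: "q \<in> carrier xR \<Longrightarrow> c \<in> carrier xR \<Longrightarrow>
   degree ((X \<ominus>\<^bsub>xP\<^esub> poly_of_const q) \<otimes>\<^bsub>xP\<^esub> poly_of_const c) \<le> 1"
proof -
  assume q: "q \<in> carrier xR" and c: "c \<in> carrier xR"
  have "degree (X \<ominus>\<^bsub>xP\<^esub> poly_of_const q) \<le> 1"
    using deg_minus[OF X_carrier const_carrier[OF q]] const_degree[of q]
    by (simp add: var_def)
  then show ?thesis
    using deg_mult[of "X \<ominus>\<^bsub>xP\<^esub> poly_of_const q" "poly_of_const c"] X_carrier const_carrier q c const_degree[of c]
    by auto
qed

lemma deg_finprod:
  assumes "finite A" "f \<in> A \<rightarrow> carrier xP" "\<forall>a\<in>A. degree (f a) \<le> 1"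
  shows "degree (finprod xP f A) \<le> card A"
  using assms
proof (induction A rule: finite_induct)
  case empty
  then show ?case by (simp add: univ_poly_one)
next
  case (insert a A)
  have "finprod xP f (insert a A) = f a \<otimes>\<^bsub>xP\<^esub> finprod xP f A"
    using insert by (intro xP.finprod_insert) auto
  moreover have "degree (f a \<otimes>\<^bsub>xP\<^esub> finprod xP f A) \<le> degree (f a) + degree (finprod xP f A)"
    using insert by (intro deg_mult) (auto intro: xP.finprod_closed)
  ultimately show ?case using insert by auto
qed

lemma deg_finsum:
  assumes "finite A" "f \<in> A \<rightarrow> carrier xP" "\<forall>a\<in>A. degree (f a) \<le> d"
  shows "degree (finsum xP f A) \<le> d"
  using assms
proof (induction A rule: finite_induct)
  case empty
  then show ?case by (simp add: univ_poly_zero)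
next
  case (insert a A)
  have "finsum xP f (insert a A) = f a \<oplus>\<^bsub>xP\<^esub> finsum xP f A"
    using insert by (intro xP.finsum_insert) auto
  then show ?case using insert deg_add[of "f a" "finsum xP f A"] by auto
qed

lemma lpoly_props:
  assumes sub: "{1..k} \<subseteq> carrier xR" and j: "j \<in> {1..k}"
  shows "lpoly xR k j \<in> carrier xP" "degree (lpoly xR k j) \<le> k - 1"
    "\<And>a. a \<in> carrier xR \<Longrightarrow> eval (lpoly xR k j) a = hcoef xR k a j"
proof -
  let ?f = "\<lambda>q. (X \<ominus>\<^bsub>xP\<^esub> poly_of_const q) \<otimes>\<^bsub>xP\<^esub> poly_of_const (inv (j \<ominus> q))"
  have jc: "j \<in> carrier xR" using j sub by auto
  have qc: "\<And>q. q \<in> {1..k} - {j} \<Longrightarrow> q \<in> carrier xR \<and> inv (j \<ominus> q) \<in> carrier xR"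
    using sub jc inv_diff_carrier by auto
  have fc: "?f \<in> {1..k} - {j} \<rightarrow> carrier xP" using qc factor_carrier by auto
  show "lpoly xR k j \<in> carrier xP" unfolding lpoly_def using fc by (rule xP.finprod_closed)
  have "degree (lpoly xR k j) \<le> card ({1..k} - {j})"
    unfolding lpoly_def using fc qc factor_degree by (intro deg_finprod) auto
  also have "card ({1..k} - {j}) = k - 1" using j by simp
  finally show "degree (lpoly xR k j) \<le> k - 1" .
  fix a assume a: "a \<in> carrier xR"
  interpret h: ring_hom_cring xP xR "\<lambda>p. eval p a" using eval_hom_cring[OF a] .
  have "eval (lpoly xR k j) a = finprod xR ((\<lambda>p. eval p a) \<circ> ?f) ({1..k} - {j})"
    unfolding lpoly_def using fc by (intro h.hom_finprod) auto
  also have "\<dots> = hcoef xR k a j"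
    unfolding hcoef_def
  proof (rule finprod_cong')
    fix q assume q: "q \<in> {1..k} - {j}"
    have "eval (?f q) a = eval (X \<ominus>\<^bsub>xP\<^esub> poly_of_const q) a \<otimes> eval (poly_of_const (inv (j \<ominus> q))) a"
      using qc[OF q] X_carrier const_carrier by (intro h.hom_mult) auto
    also have "eval (X \<ominus>\<^bsub>xP\<^esub> poly_of_const q) a = eval X a \<ominus> eval (poly_of_const q) a"
      using qc[OF q] X_carrier const_carrier by (intro h.hom_sub) auto
    finally show "((\<lambda>p. eval p a) \<circ> ?f) q = (a \<ominus> q) \<otimes> inv (j \<ominus> q)"
      using qc[OF q] a by (simp add: eval_var const_eval)
  next
    show "(\<lambda>q. (a \<ominus> q) \<otimes> inv (j \<ominus> q)) \<in> {1..k} - {j} \<rightarrow> carrier xR"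
      using qc a by auto
  qed simp
  finally show "eval (lpoly xR k j) a = hcoef xR k a j" .
qed

lemma hpoly_props:
  assumes sub: "{1..k} \<subseteq> carrier xR" and x: "\<forall>j\<in>{1..k}. x j \<in> carrier xR"
  shows "hpoly xR k x \<in> carrier xP" "degree (hpoly xR k x) \<le> k - 1"
    "\<And>a. a \<in> carrier xR \<Longrightarrow> eval (hpoly xR k x) a = heval xR k a x"
proof -
  let ?f = "\<lambda>j. lpoly xR k j \<otimes>\<^bsub>xP\<^esub> poly_of_const (x j)"
  have fc: "?f \<in> {1..k} \<rightarrow> carrier xP" using lpoly_props(1)[OF sub] const_carrier x by auto
  show "hpoly xR k x \<in> carrier xP" unfolding hpoly_def using fc by (rule xP.finsum_closed)
  show "degree (hpoly xR k x) \<le> k - 1" unfolding hpoly_def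
  proof (rule deg_finsum)
    show "\<forall>a\<in>{1..k}. degree (?f a) \<le> k - 1"
    proof
      fix a assume a: "a \<in> {1..k}"
      have "degree (?f a) \<le> degree (lpoly xR k a) + degree (poly_of_const (x a))"
        using lpoly_props(1)[OF sub a] const_carrier x a by (intro deg_mult) auto
      then show "degree (?f a) \<le> k - 1" using lpoly_props(2)[OF sub a] const_degree[of "x a"] by simp
    qed
  qed (use fc in auto)
  fix a assume a: "a \<in> carrier xR"
  interpret h: ring_hom_cring xP xR "\<lambda>p. eval p a" using eval_hom_cring[OF a] .
  have "eval (hpoly xR k x) a = finsum xR ((\<lambda>p. eval p a) \<circ> ?f) {1..k}"
    unfolding hpoly_def using fc by (intro h.hom_finsum) auto
  also have "\<dots> = heval xR k a x"
    unfolding heval_def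
  proof (rule finsum_cong')
    fix j assume j: "j \<in> {1..k}"
    show "((\<lambda>p. eval p a) \<circ> ?f) j = hcoef xR k a j \<otimes> x j"
      using lpoly_props[OF sub j] const_carrier x j a const_eval
      by (simp add: h.hom_mult)
  next
    show "(\<lambda>j. hcoef xR k a j \<otimes> x j) \<in> {1..k} \<rightarrow> carrier xR"
      using hcoef_carrier[OF sub a] x by auto
  qed simp
  finally show "eval (hpoly xR k x) a = heval xR k a x" .
qed

lemma heval_carrier:
  assumes sub: "{1..k} \<subseteq> carrier xR" and x: "\<forall>j\<in>{1..k}. x j \<in> carrier xR" and a: "a \<in> carrier xR"
  shows "heval xR k a x \<in> carrier xR"
  unfolding heval_def by (rule finsum_closed) (use hcoef_carrier[OF sub a] x in auto)

lemma mds: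
  assumes sub: "{1..k} \<subseteq> carrier xR" and x: "\<forall>j\<in>{1..k}. x j \<in> carrier xR"
    and x': "\<forall>j\<in>{1..k}. x' j \<in> carrier xR"
    and S: "S \<subseteq> carrier xR" "finite S" "k \<le> card S"
    and eq: "\<forall>p\<in>S. heval xR k p x = heval xR k p x'"
  shows "\<forall>j\<in>{1..k}. x j = x' j"
proof (cases "k = 0")
  case True then show ?thesis by simp
next
  case False
  let ?D = "hpoly xR k x \<ominus>\<^bsub>xP\<^esub> hpoly xR k x'"
  have Dc: "?D \<in> carrier xP" using hpoly_props(1)[OF sub x] hpoly_props(1)[OF sub x'] by auto
  have m: "max (degree (hpoly xR k x)) (degree (hpoly xR k x')) \<le> k - 1"
    using hpoly_props(2)[OF sub x] hpoly_props(2)[OF sub x'] by (rule max.boundedI)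
  have Ddeg: "degree ?D \<le> k - 1"
    using deg_minus[OF hpoly_props(1)[OF sub x] hpoly_props(1)[OF sub x']] m by (rule order_trans)
  have Deval: "eval ?D a = heval xR k a x \<ominus> heval xR k a x'" if a: "a \<in> carrier xR" for a
  proof -
    interpret h: ring_hom_cring xP xR "\<lambda>p. eval p a" using eval_hom_cring[OF a] .
    have "eval ?D a = eval (hpoly xR k x) a \<ominus> eval (hpoly xR k x') a"
      using hpoly_props(1)[OF sub x] hpoly_props(1)[OF sub x'] by (rule h.hom_sub)
    then show ?thesis using hpoly_props(3)[OF sub x a] hpoly_props(3)[OF sub x' a] by simp
  qed
  have "?D = []"
  proof (rule ccontr)
    assume ne: "?D \<noteq> []"
    have "S \<subseteq> set_mset (roots ?D)"
    proof
      fix p assume p: "p \<in> S"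
      have pc: "p \<in> carrier xR" using p S by auto
      have "eval ?D p = \<zero>" using Deval[OF pc] eq p heval_carrier[OF sub x' pc] by simp
      then have "is_root ?D p" unfolding is_root_def using pc ne by simp
      then show "p \<in> set_mset (roots ?D)" using roots_mem_iff_is_root[OF Dc] by simp
    qed
    then have c1: "card S \<le> card (set_mset (roots ?D))" by (intro card_mono) auto
    have c2: "card (set_mset (roots ?D)) = size (mset_set (set_mset (roots ?D)))"
      by (rule size_mset_set[symmetric])
    have c3: "size (mset_set (set_mset (roots ?D))) \<le> size (roots ?D)"
      by (intro size_mset_mono mset_set_set_mset_msubset)
    have c4: "size (roots ?D) \<le> degree ?D" by (rule size_roots_le_degree[OF Dc])
    have "card S \<le> k - 1" using c1 c2 c3 c4 Ddeg by linarith
    then show False using S(3) False by linarith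
  qed
  then have "?D = \<zero>\<^bsub>xP\<^esub>" by (simp add: univ_poly_zero)
  then have hh: "hpoly xR k x = hpoly xR k x'"
    using xP.r_right_minus_eq[OF hpoly_props(1)[OF sub x] hpoly_props(1)[OF sub x']] by simp
  show ?thesis
  proof
    fix j assume j: "j \<in> {1..k}"
    have jc: "j \<in> carrier xR" using j sub by auto
    have "x j = heval xR k j x" using heval_node[OF sub j x] by simp
    also have "\<dots> = eval (hpoly xR k x) j" using hpoly_props(3)[OF sub x jc] by simp
    also have "\<dots> = eval (hpoly xR k x') j" using hh by simp
    also have "\<dots> = heval xR k j x'" using hpoly_props(3)[OF sub x' jc] by simp
    also have "\<dots> = x' j" using heval_node[OF sub j x'] by simp
    finally show "x j = x' j" .
  qed
qed

end


lemma bitsum_lt: "(\<Sum>b<c. if A b then 2 ^ b else 0) < (2::nat) ^ c"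
proof (induction c)
  case 0 then show ?case by simp
next
  case (Suc c) then show ?case by auto
qed

lemma bitsum_inj:
  "(\<Sum>b<c. if A b then 2 ^ b else 0) = (\<Sum>b<c. if B b then 2 ^ b else (0::nat)) \<Longrightarrow> \<forall>b<c. A b = B b"
proof (induction c)
  case 0 then show ?case by simp
next
  case (Suc c)
  let ?s = "\<lambda>A. (\<Sum>b<c. if A b then 2 ^ b else (0::nat))"
  have e: "?s A + (if A c then 2 ^ c else 0) = ?s B + (if B c then 2 ^ c else 0)"
    using Suc.prems by simp
  have lt: "?s A < 2 ^ c" "?s B < 2 ^ c" by (rule bitsum_lt)+
  have pc: "A c = B c"
  proof (rule ccontr)
    assume "A c \<noteq> B c"
    then show False using e lt by (cases "A c") auto
  qed
  then have "?s A = ?s B" using e by simp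
  then have "\<forall>b<c. A b = B b" by (rule Suc.IH)
  then show ?case using pc less_Suc_eq by auto
qed

lemma enc_lt: "enc c m j < 2 ^ c"
  unfolding enc_def by (rule bitsum_lt)

lemma enc_inj:
  assumes len: "length m = l" "length m' = l" and lk: "l \<le> k * c"
    and eq: "\<forall>j\<in>{1..k}. enc c m j = enc c m' j"
  shows "m = m'"
proof (rule nth_equalityI)
  show "length m = length m'" using len by simp
  fix q assume q: "q < length m"
  have qk: "q < k * c" using q len lk by simp
  then have c0: "c > 0" by (cases c) auto
  define j where "j = q div c + 1"
  define b where "b = q mod c"
  have "q div c < k" using qk c0 by (simp add: div_less_iff_less_mult mult.commute)
  then have jk: "j \<in> {1..k}" unfolding j_def by simp
  have bc: "b < c" unfolding b_def using c0 by simp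
  have qe: "(j - 1) * c + b = q" unfolding j_def b_def by simp
  have "\<forall>b<c. pbit m ((j - 1) * c + b) = pbit m' ((j - 1) * c + b)"
    using eq jk unfolding enc_def by (intro bitsum_inj) auto
  then have "pbit m q = pbit m' q" using bc qe by metis
  then show "m ! q = m' ! q" using q len unfolding pbit_def by simp
qed


lemma kval_pos: "kval t \<ge> 1" unfolding kval_def by simp
lemma kval_le: "kval t \<le> t + 1" unfolding kval_def by simp
lemma kval_real: "real (kval t) \<le> real t / 5 + 1" "real t / 5 \<le> real (kval t)"
proof -
  have a: "5 * (t div 5) \<le> t" by simp
  have b: "t < 5 * (t div 5 + 1)" by simp
  have a': "5 * real (t div 5) \<le> real t" using a by (simp flip: of_nat_mult)
  have "t \<le> 5 * (t div 5) + 5" using b by linarith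
  then have "real t \<le> real (5 * (t div 5) + 5)" by (simp only: of_nat_le_iff)
  then have b': "real t \<le> 5 * (real (t div 5) + 1)" by simp
  show "real (kval t) \<le> real t / 5 + 1" "real t / 5 \<le> real (kval t)"
    unfolding kval_def using a' b' by simp_all
qed

lemma cval_ge: "max (real l) ((real t / 5 + 1) * log 2 (real N + 1)) / real (kval t) \<le> real (cval N t l)"
proof -
  let ?x = "max (real l) ((real t / 5 + 1) * log 2 (real N + 1)) / real (kval t)"
  have "?x \<ge> 0" using kval_pos[of t] by (simp add: le_max_iff_disj)
  then show ?thesis unfolding cval_def by linarith
qed

lemma cval_l: "l \<le> kval t * cval N t l"
proof -
  have k: "real (kval t) > 0" using kval_pos[of t] by simp
  have "real l / real (kval t) \<le> real (cval N t l)"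
    using cval_ge[of l t N] k by (smt (verit) divide_right_mono max.cobounded1)
  then have "real l \<le> real (kval t) * real (cval N t l)" using k by (simp add: field_simps)
  then show ?thesis by (simp flip: of_nat_mult)
qed

lemma cval_pos: "l \<ge> 1 \<Longrightarrow> cval N t l \<ge> 1"
  using cval_l[of l t N] by (cases "cval N t l") auto

lemma cval_N: "N < 2 ^ cval N t l"
proof -
  have k: "real (kval t) > 0" using kval_pos[of t] by simp
  have lg: "log 2 (real N + 1) \<ge> 0" by simp
  have "log 2 (real N + 1) \<le> (real t / 5 + 1) * log 2 (real N + 1) / real (kval t)"
  proof -
    have "real (kval t) * log 2 (real N + 1) \<le> (real t / 5 + 1) * log 2 (real N + 1)"
      using kval_real(1)[of t] lg by (rule mult_right_mono)
    then show ?thesis using k by (simp add: field_simps)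
  qed
  also have "\<dots> \<le> real (cval N t l)" using cval_ge[of l t N] k
    by (smt (verit) divide_right_mono max.cobounded2)
  finally have "log 2 (real N + 1) \<le> real (cval N t l)" .
  then have "2 powr (log 2 (real N + 1)) \<le> 2 powr real (cval N t l)" by (intro powr_mono) auto
  moreover have "2 powr (log 2 (real N + 1)) = real N + 1" by simp
  ultimately have "real N + 1 \<le> 2 powr real (cval N t l)" by simp
  then have "real N + 1 \<le> 2 ^ cval N t l" by (simp add: powr_realpow)
  then have "real (N + 1) \<le> real (2 ^ cval N t l)" by simp
  then have "N + 1 \<le> 2 ^ cval N t l" by (simp only: of_nat_le_iff)
  then show ?thesis by simp
qed


lemma mostfreq_major:
  assumes fin: "finite A" and lt: "card {j\<in>A. f j \<noteq> v0} < card {j\<in>A. f j = v0}"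
  shows "mostfreq A f = v0"
proof -
  have "0 < card {j\<in>A. f j = v0}" using lt by linarith
  then have "{j\<in>A. f j = v0} \<noteq> {}" using card_gt_0_iff by blast
  then obtain j0 where j0: "j0 \<in> A" "f j0 = v0" by blast
  then have v0in: "v0 \<in> f ` A" by blast
  have ne: "A \<noteq> {}" using j0 by blast
  let ?xP = "\<lambda>v. v \<in> f ` A \<and> (\<forall>v'\<in>f ` A. card {j\<in>A. f j = v'} \<le> card {j\<in>A. f j = v})"
  have other: "card {j\<in>A. f j = v'} \<le> card {j\<in>A. f j \<noteq> v0}" if "v' \<noteq> v0" for v'
    using fin that by (intro card_mono) auto
  have P0: "?xP v0"
  proof (intro conjI ballI v0in)
    fix v' assume "v' \<in> f ` A"
    show "card {j\<in>A. f j = v'} \<le> card {j\<in>A. f j = v0}"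
    proof (cases "v' = v0")
      case False then show ?thesis using other[OF False] lt by linarith
    qed simp
  qed
  have uniq: "v = v0" if Pv: "?xP v" for v
  proof (rule ccontr)
    assume "v \<noteq> v0"
    then have a: "card {j\<in>A. f j = v} \<le> card {j\<in>A. f j \<noteq> v0}" by (rule other)
    have b: "card {j\<in>A. f j = v0} \<le> card {j\<in>A. f j = v}" using Pv v0in by (elim conjE) (erule bspec)
    show False using a b lt by linarith
  qed
  have "(LEAST v. ?xP v) = v0"
  proof (rule Least_equality)
    show "?xP v0" by (rule P0)
    fix y assume "?xP y"
    then have "y = v0" by (rule uniq)
    then show "v0 \<le> y" by simp
  qed
  then show ?thesis unfolding mostfreq_def using ne by simp
qed

lemma card_union3:
  assumes "finite A" "finite B" "finite C"
  shows "card A + card B + card C \<le> card (A \<union> B \<union> C) + card (A \<inter> B) + card (A \<inter> C) + card (B \<inter> C)"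
proof -
  have 1: "card (A \<union> B) + card (A \<inter> B) = card A + card B" using assms card_Un_Int by metis
  have 2: "card ((A \<union> B) \<union> C) + card ((A \<union> B) \<inter> C) = card (A \<union> B) + card C" using assms card_Un_Int
    by (metis finite_UnI)
  have "(A \<union> B) \<inter> C = (A \<inter> C) \<union> (B \<inter> C)" by auto
  then have 3: "card ((A \<union> B) \<inter> C) \<le> card (A \<inter> C) + card (B \<inter> C)" by (simp add: card_Un_le)
  show ?thesis using 1 2 3 by linarith
qed

context
  fixes F :: "nat \<Rightarrow> nat ring"
    and BA :: "nat \<Rightarrow> nat \<Rightarrow> nat set \<Rightarrow> (nat \<Rightarrow> bool) \<Rightarrow> 'a \<Rightarrow> (nat \<Rightarrow> bool) \<times> nat \<times> nat"
    and N t l :: nat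
    and w :: "nat \<Rightarrow> bool list"
    and D :: "nat set"
    and A :: "'a adv"
  assumes GF: "\<forall>c\<ge>1. field (F c) \<and> carrier (F c) = {..<2 ^ c} \<and> \<zero>\<^bsub>F c\<^esub> = 0"
    and BAok: "binary_BA BA"
    and Nt: "3 * t + 1 \<le> N" and l1: "1 \<le> l" and Dsub: "D \<subseteq> {1..N}" and Dcard: "card D \<le> t"
    and len: "\<forall>i\<in>{1..N} - D. length (w i) = l"
begin

abbreviation "xR \<equiv> cR F N t l"
abbreviation "xc \<equiv> cval N t l"
abbreviation "xk \<equiv> kval t"
abbreviation "xH \<equiv> {1..N} - D"
abbreviation "xdd \<equiv> card D"
abbreviation "xcw m p \<equiv> heval xR xk p (enc xc m)"
abbreviation "\<theta> \<equiv> N - t - xdd"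

abbreviation "xs1 \<equiv> cs1 F N t l w D A"
abbreviation "xs2 \<equiv> cs2 F N t l w D A"
abbreviation "xs3 \<equiv> cs3 F N t l w D A"
abbreviation "xu1 \<equiv> cu1 F N t l w D A"

lemma fieldR: "field xR" and carrR: "carrier xR = {..<2 ^ xc}" and zeroR: "\<zero>\<^bsub>xR\<^esub> = 0"
  using GF cval_pos[OF l1, of N t] unfolding cR_def by auto

lemma pos_carrier: "p \<le> N \<Longrightarrow> p \<in> carrier xR"
  using cval_N[of N t l] carrR by auto

lemma kN: "xk \<le> N" using kval_le[of t] Nt by linarith

lemma sub_k: "{1..xk} \<subseteq> carrier xR" using pos_carrier kN by auto

lemma enc_carrier: "\<forall>j\<in>{1..xk}. enc xc m j \<in> carrier xR"
  using enc_lt carrR by auto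

lemma cw_carrier: "p \<le> N \<Longrightarrow> xcw m p \<in> carrier xR"
  using heval_carrier[OF fieldR sub_k enc_carrier pos_carrier] .

lemma mds_msg:
  assumes "length m = l" "length m' = l" "S \<subseteq> {1..N}" "xk \<le> card S" "\<forall>p\<in>S. xcw m p = xcw m' p"
  shows "m = m'"
proof -
  have S: "S \<subseteq> carrier xR" "finite S" using assms(3) pos_carrier finite_subset by auto
  have "\<forall>j\<in>{1..xk}. enc xc m j = enc xc m' j"
    using mds[OF fieldR sub_k enc_carrier enc_carrier S assms(4) assms(5)] .
  then show ?thesis using enc_inj[OF assms(1,2) cval_l] by blast
qed

lemma agree_small:
  assumes "length m = l" "length m' = l" "m \<noteq> m'" "S \<subseteq> {1..N}" "\<forall>p\<in>S. xcw m p = xcw m' p"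
  shows "card S \<le> xk - 1"
  using mds_msg[OF assms(1,2,4) _ assms(5)] assms(3) by linarith

lemma cy_eq: "cy F N t l w i j = xcw (w i) j"
  unfolding cy_def by simp

lemma hon: "i \<in> xH \<Longrightarrow> i \<notin> D \<and> 1 \<le> i \<and> i \<le> N \<and> length (w i) = l"
  using len by auto

lemma u1_hon:
  assumes i: "i \<in> xH" and j: "j \<in> xH" and u: "xu1 i j"
  shows "xcw (w i) j = xcw (w j) j \<and> xcw (w j) i = xcw (w i) i"
proof (cases "j = i")
  case True then show ?thesis by simp
next
  case False
  then have "crcv1 F N t l w D A i j = (cy F N t l w i i, cy F N t l w i j)" using u unfolding cu1_def by simp
  moreover have "crcv1 F N t l w D A i j = (cy F N t l w j i, cy F N t l w j j)"
    using hon[OF j] unfolding crcv1_def by simp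
  ultimately show ?thesis by (simp add: cy_eq)
qed

lemma u1_same: "i \<in> xH \<Longrightarrow> j \<in> xH \<Longrightarrow> w i = w j \<Longrightarrow> xu1 i j"
proof -
  assume j: "j \<in> xH" and e: "w i = w j"
  have "j \<notin> D" using j by simp
  then have "crcv1 F N t l w D A i j = (cy F N t l w j i, cy F N t l w j j)" unfolding crcv1_def by simp
  then show "xu1 i j" unfolding cu1_def using e by (simp add: cy_eq)
qed

lemma s2_s1: "xs2 i \<Longrightarrow> xs1 i" unfolding cs2_def by simp
lemma s3_s2: "xs3 i \<Longrightarrow> xs2 i" unfolding cs3_def by simp

lemma rec1_hon: "j \<in> xH \<Longrightarrow> crec1 F N t l w D A i j = xs1 j"
proof -
  assume j: "j \<in> xH"
  then have "j \<notin> D" by simp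
  then show ?thesis unfolding crec1_def by simp
qed

lemma rec2_hon: "j \<in> xH \<Longrightarrow> crec2 F N t l w D A i j = xs2 j"
proof -
  assume j: "j \<in> xH"
  then have jD: "j \<notin> D" by simp
  have r1: "crec1 F N t l w D A i j = xs1 j" using rec1_hon[OF j] .
  show ?thesis
  proof (cases "j = i")
    case True then show ?thesis unfolding crec2_def by simp
  next
    case False
    then show ?thesis unfolding crec2_def csnd2_def using jD r1 s2_s1[of j] by (cases "xs1 j") auto
  qed
qed

lemma rec3_hon: "j \<in> xH \<Longrightarrow> crec3 F N t l w D A i j = xs3 j"
proof -
  assume j: "j \<in> xH"
  then have jD: "j \<notin> D" by simp
  have r2: "crec2 F N t l w D A i j = xs2 j" using rec2_hon[OF j] .
  show ?thesis
  proof (cases "j = i")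
    case True then show ?thesis unfolding crec3_def by simp
  next
    case False
    then show ?thesis unfolding crec3_def csnd3_def using jD r2 s3_s2[of j] by (cases "xs2 j") auto
  qed
qed

lemma count_hon: "card {j\<in>cPr N. Q j} \<le> card {j\<in>xH. Q j} + xdd"
proof -
  have "{j\<in>cPr N. Q j} \<subseteq> {j\<in>xH. Q j} \<union> D" unfolding cPr_def by auto
  then have "card {j\<in>cPr N. Q j} \<le> card ({j\<in>xH. Q j} \<union> D)"
    using Dsub by (intro card_mono) (auto intro: finite_subset)
  also have "\<dots> \<le> card {j\<in>xH. Q j} + xdd" by (rule card_Un_le)
  finally show ?thesis .
qed

lemma S1: "xs1 i \<Longrightarrow> \<theta> \<le> card {j\<in>xH. xu1 i j}"
  using count_hon[of "xu1 i"] unfolding cs1_def by linarith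

lemma S2: "i \<in> xH \<Longrightarrow> xs2 i \<Longrightarrow> \<theta> \<le> card {j\<in>xH. xu1 i j \<and> xs1 j}"
proof -
  assume i: "i \<in> xH" and s: "xs2 i"
  have "{j\<in>xH. cu2 F N t l w D A i j} = {j\<in>xH. xu1 i j \<and> xs1 j}"
    unfolding cu2_def using rec1_hon by auto
  then have "card {j\<in>cPr N. cu2 F N t l w D A i j} \<le> card {j\<in>xH. xu1 i j \<and> xs1 j} + xdd"
    using count_hon[of "cu2 F N t l w D A i"] by simp
  then show ?thesis using s unfolding cs2_def by linarith
qed

lemma S3: "i \<in> xH \<Longrightarrow> xs3 i \<Longrightarrow> \<theta> \<le> card {j\<in>xH. xu1 i j \<and> xs2 j}"
proof -
  assume i: "i \<in> xH" and s: "xs3 i"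
  have "{j\<in>xH. cu3 F N t l w D A i j} = {j\<in>xH. xu1 i j \<and> xs2 j}"
    unfolding cu3_def cu2_def using rec1_hon rec2_hon s2_s1 by auto
  then have "card {j\<in>cPr N. cu3 F N t l w D A i j} \<le> card {j\<in>xH. xu1 i j \<and> xs2 j} + xdd"
    using count_hon[of "cu3 F N t l w D A i"] by simp
  then show ?thesis using s unfolding cs3_def by linarith
qed

lemma cardH: "card xH = N - xdd"
  using Dsub by (simp add: card_Diff_subset finite_subset)

lemma arith1: "card xH < 2 * \<theta>" using cardH Nt Dcard by linarith
lemma arith2: "xk - 1 < \<theta>" using Nt Dcard unfolding kval_def by linarith
lemma arith3: "card xH + 3 * (xk - 1) < 3 * \<theta>"
  using cardH Nt Dcard unfolding kval_def by linarith

definition "Yset m = {p\<in>xH. xcw m p = xcw (w p) p}"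

lemma Nb_Y: "i \<in> xH \<Longrightarrow> {j\<in>xH. xu1 i j} \<subseteq> Yset (w i)"
proof
  fix j assume i: "i \<in> xH" and j: "j \<in> {j\<in>xH. xu1 i j}"
  then have "xcw (w i) j = xcw (w j) j" using u1_hon[OF i] by blast
  then show "j \<in> Yset (w i)" using j unfolding Yset_def by blast
qed

lemma Y_inter: "i \<in> xH \<Longrightarrow> i' \<in> xH \<Longrightarrow> w i \<noteq> w i' \<Longrightarrow> card (Yset (w i) \<inter> Yset (w i')) \<le> xk - 1"
proof -
  assume i: "i \<in> xH" and i': "i' \<in> xH" and ne: "w i \<noteq> w i'"
  show ?thesis
  proof (rule agree_small[of "w i" "w i'"])
    show "length (w i) = l" "length (w i') = l" using hon[OF i] hon[OF i'] by simp_all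
    show "w i \<noteq> w i'" by fact
    show "Yset (w i) \<inter> Yset (w i') \<subseteq> {1..N}" unfolding Yset_def by blast
    show "\<forall>p\<in>Yset (w i) \<inter> Yset (w i'). xcw (w i) p = xcw (w i') p" unfolding Yset_def by simp
  qed
qed

lemma stepA:
  assumes "i1 \<in> xH" "i2 \<in> xH" "i3 \<in> xH" "xs1 i1" "xs1 i2" "xs1 i3"
    "w i1 \<noteq> w i2" "w i1 \<noteq> w i3" "w i2 \<noteq> w i3"
  shows False
proof -
  let ?Y1 = "Yset (w i1)" and ?Y2 = "Yset (w i2)" and ?Y3 = "Yset (w i3)"
  have fin: "finite ?Y1" "finite ?Y2" "finite ?Y3" unfolding Yset_def by auto
  have c1: "\<theta> \<le> card ?Y1" using S1[OF assms(4)] Nb_Y[OF assms(1)] card_mono[OF fin(1)] by (meson order_trans)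
  have c2: "\<theta> \<le> card ?Y2" using S1[OF assms(5)] Nb_Y[OF assms(2)] card_mono[OF fin(2)] by (meson order_trans)
  have c3: "\<theta> \<le> card ?Y3" using S1[OF assms(6)] Nb_Y[OF assms(3)] card_mono[OF fin(3)] by (meson order_trans)
  have "card (?Y1 \<union> ?Y2 \<union> ?Y3) \<le> card xH" by (intro card_mono) (auto simp: Yset_def)
  moreover note card_union3[OF fin]
  moreover note Y_inter[OF assms(1,2,7)] Y_inter[OF assms(1,3,8)] Y_inter[OF assms(2,3,9)]
  ultimately show False using c1 c2 c3 arith3 by linarith
qed

lemma two_classes:
  assumes "i \<in> xH" "i' \<in> xH" "p \<in> xH" "xs1 i" "xs1 i'" "xs1 p" "w i \<noteq> w i'"
  shows "w p = w i \<or> w p = w i'"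
proof (rule ccontr)
  assume "\<not> (w p = w i \<or> w p = w i')"
  then have "w i \<noteq> w p" "w i' \<noteq> w p" by auto
  then show False using stepA[OF assms(1,2,3,4,5,6,7)] by simp
qed

lemma sideB:
  assumes i: "i \<in> xH" and i': "i' \<in> xH" and s: "xs3 i" "xs3 i'" and ne: "w i \<noteq> w i'"
  shows "\<theta> \<le> card {p\<in>xH. xs1 p \<and> w p = w i}"
proof -
  let ?Z = "{p\<in>xH. xcw (w i) p = xcw (w i') p}"
  have Zc: "card ?Z \<le> xk - 1" by (rule agree_small) (use hon[OF i] hon[OF i'] ne in auto)
  have s1i: "xs1 i" "xs1 i'" using s s3_s2 s2_s1 by auto
  have "\<exists>j. j \<in> xH \<and> xs2 j \<and> w j = w i \<and> j \<notin> ?Z"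
  proof (rule ccontr)
    assume no: "\<not> ?thesis"
    have "{j\<in>xH. xu1 i j \<and> xs2 j} \<subseteq> ?Z"
    proof
      fix j assume j: "j \<in> {j\<in>xH. xu1 i j \<and> xs2 j}"
      then have jH: "j \<in> xH" and uj: "xu1 i j" and s2j: "xs2 j" by auto
      have "w j = w i \<or> w j = w i'" using two_classes[OF i i' jH s1i s2_s1[OF s2j] ne] .
      then show "j \<in> ?Z"
      proof
        assume "w j = w i" then show ?thesis using no jH s2j by blast
      next
        assume wj: "w j = w i'"
        have "xcw (w i) j = xcw (w j) j" using u1_hon[OF i jH uj] by simp
        then show ?thesis using wj jH by simp
      qed
    qed
    then have "card {j\<in>xH. xu1 i j \<and> xs2 j} \<le> card ?Z" by (intro card_mono) auto
    then show False using S3[OF i s(1)] Zc arith2 by linarith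
  qed
  then obtain j where jH: "j \<in> xH" and s2j: "xs2 j" and wj: "w j = w i" and jZ: "j \<notin> ?Z" by blast
  have "{p\<in>xH. xu1 j p \<and> xs1 p} \<subseteq> {p\<in>xH. xs1 p \<and> w p = w i}"
  proof
    fix p assume p: "p \<in> {p\<in>xH. xu1 j p \<and> xs1 p}"
    then have pH: "p \<in> xH" and up: "xu1 j p" and s1p: "xs1 p" by auto
    have "w p = w i \<or> w p = w i'" using two_classes[OF i i' pH s1i s1p ne] .
    moreover have "w p \<noteq> w i'"
    proof
      assume wp: "w p = w i'"
      have "xcw (w p) j = xcw (w j) j" using u1_hon[OF jH pH up] by simp
      then have "xcw (w i') j = xcw (w i) j" using wp wj by simp
      then show False using jZ jH by simp
    qed
    ultimately show "p \<in> {p\<in>xH. xs1 p \<and> w p = w i}" using pH s1p by auto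
  qed
  then have "card {p\<in>xH. xu1 j p \<and> xs1 p} \<le> card {p\<in>xH. xs1 p \<and> w p = w i}" by (intro card_mono) auto
  then show ?thesis using S2[OF jH s2j] by linarith
qed

lemma L1:
  assumes i: "i \<in> xH" and i': "i' \<in> xH" and s: "xs3 i" "xs3 i'"
  shows "w i = w i'"
proof (rule ccontr)
  assume ne: "w i \<noteq> w i'"
  have a: "\<theta> \<le> card {p\<in>xH. xs1 p \<and> w p = w i}" using sideB[OF i i' s ne] .
  have b: "\<theta> \<le> card {p\<in>xH. xs1 p \<and> w p = w i'}" using sideB[OF i' i s(2) s(1)] ne by auto
  have "card ({p\<in>xH. xs1 p \<and> w p = w i} \<union> {p\<in>xH. xs1 p \<and> w p = w i'}) = card {p\<in>xH. xs1 p \<and> w p = w i} + card {p\<in>xH. xs1 p \<and> w p = w i'}"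
    using ne by (intro card_Un_disjoint) auto
  moreover have "card ({p\<in>xH. xs1 p \<and> w p = w i} \<union> {p\<in>xH. xs1 p \<and> w p = w i'}) \<le> card xH"
    by (intro card_mono) auto
  ultimately show False using a b arith1 by linarith
qed


abbreviation "xdec \<equiv> cdec F BA N t l w D A"
abbreviation "xvote \<equiv> cvote F N t l w D A"
abbreviation "xout \<equiv> core_out F BA N t l w D A"

lemma BA_spec:
  "(\<forall>i\<in>xH. \<forall>j\<in>xH. xdec i = xdec j) \<and> (\<forall>x. (\<forall>i\<in>xH. xvote i = x) \<longrightarrow> (\<forall>i\<in>xH. xdec i = x))"
proof -
  have "\<exists>Cb::real. \<forall>N t D v a. 3 * t + 1 \<le> N \<and> D \<subseteq> {1..N} \<and> card D \<le> t \<longrightarrow>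
     (case BA N t D v a of (d, r, b) \<Rightarrow>
        (\<forall>i\<in>{1..N} - D. \<forall>j\<in>{1..N} - D. d i = d j) \<and>
        (\<forall>x. (\<forall>i\<in>{1..N} - D. v i = x) \<longrightarrow> (\<forall>i\<in>{1..N} - D. d i = x)) \<and>
        real r \<le> Cb * max 1 (real t) \<and>
        real b \<le> Cb * real N * max 1 (real t))"
    using BAok unfolding binary_BA_def .
  then obtain Cb :: real where C: "\<forall>N t D v a. 3 * t + 1 \<le> N \<and> D \<subseteq> {1..N} \<and> card D \<le> t \<longrightarrow>
     (case BA N t D v a of (d, r, b) \<Rightarrow>
        (\<forall>i\<in>{1..N} - D. \<forall>j\<in>{1..N} - D. d i = d j) \<and>
        (\<forall>x. (\<forall>i\<in>{1..N} - D. v i = x) \<longrightarrow> (\<forall>i\<in>{1..N} - D. d i = x)) \<and>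
        real r \<le> Cb * max 1 (real t) \<and>
        real b \<le> Cb * real N * max 1 (real t))" ..
  obtain dv r b where eq: "BA N t D xvote (aBA A) = (dv, r, b)" by (cases "BA N t D xvote (aBA A)") auto
  have pre: "3 * t + 1 \<le> N \<and> D \<subseteq> {1..N} \<and> card D \<le> t" using Nt Dsub Dcard by (intro conjI)
  have C1: "case BA N t D xvote (aBA A) of (d, r, b) \<Rightarrow>
        (\<forall>i\<in>{1..N} - D. \<forall>j\<in>{1..N} - D. d i = d j) \<and>
        (\<forall>x. (\<forall>i\<in>{1..N} - D. xvote i = x) \<longrightarrow> (\<forall>i\<in>{1..N} - D. d i = x)) \<and>
        real r \<le> Cb * max 1 (real t) \<and>
        real b \<le> Cb * real N * max 1 (real t)"
    by (rule mp[OF C[THEN spec[of _ N], THEN spec[of _ t], THEN spec[of _ D], THEN spec[of _ xvote], THEN spec[of _ "aBA A"]] pre])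
  then have C2: "(\<forall>i\<in>xH. \<forall>j\<in>xH. dv i = dv j) \<and>
        (\<forall>x. (\<forall>i\<in>xH. xvote i = x) \<longrightarrow> (\<forall>i\<in>xH. dv i = x))"
    unfolding eq by (simp only: prod.case) (elim conjE, intro conjI)
  have "xdec = dv" unfolding cdec_def cBA_def eq by (rule ext) (simp only: prod.sel)
  then show ?thesis using C2 by (simp only:)
qed

lemma dec_cons: "i \<in> xH \<Longrightarrow> j \<in> xH \<Longrightarrow> xdec i = xdec j" using BA_spec by blast

lemma dec_valid: "\<forall>i\<in>xH. xvote i = x \<Longrightarrow> i \<in> xH \<Longrightarrow> xdec i = x" using BA_spec by blast

lemma out_len: "i \<in> xH \<Longrightarrow> xout i = Some m \<Longrightarrow> length m = l"
proof -
  assume i: "i \<in> xH" and o: "xout i = Some m"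
  let ?Q = "\<lambda>m. length m = l \<and> N - t \<le> card {j\<in>cPr N. heval xR xk j (enc xc m) = cz F BA N t l w D A i j}"
  show ?thesis
  proof (cases "xs3 i")
    case True
    then show ?thesis using o hon[OF i] unfolding core_out_def by (auto split: if_splits)
  next
    case False
    then have "cdecode F N t l (cz F BA N t l w D A i) = Some m" using o unfolding core_out_def by (auto split: if_splits)
    then have ex: "\<exists>m. ?Q m" and mm: "m = (SOME m. ?Q m)" unfolding cdecode_def by (auto split: if_splits)
    from someI_ex[OF ex] show ?thesis using mm by simp
  qed
qed

lemma card_inter_ge:
  assumes "U \<subseteq> {1..N}" "V \<subseteq> {1..N}"
  shows "card U + card V \<le> card (U \<inter> V) + N"
proof -
  have fin: "finite U" "finite V" using assms finite_subset by auto
  have "card (U \<union> V) \<le> N" using assms by (metis card_atLeastAtMost card_mono diff_Suc_1 finite_atLeastAtMost le_sup_iff)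
  then show ?thesis using card_Un_Int[OF fin] by linarith
qed

lemma decode_unique:
  assumes m0: "length m0 = l" and m: "length m = l"
    and G: "G \<subseteq> {1..N}" "N - t \<le> card G" "\<forall>p\<in>G. xcw m p = z p"
    and G0: "\<forall>p\<in>xH. xcw m0 p = z p"
  shows "m = m0"
proof -
  let ?S = "G \<inter> xH"
  have cH: "card xH = N - xdd" by (rule cardH)
  have "card G + card xH \<le> card ?S + N" by (rule card_inter_ge) (use G in auto)
  then have "xk \<le> card ?S" using G(2) cH Nt Dcard unfolding kval_def by linarith
  moreover have "\<forall>p\<in>?S. xcw m p = xcw m0 p" using G(3) G0 by auto
  ultimately show ?thesis using mds_msg[OF m m0, of ?S] by auto
qed

lemma core_valid:
  assumes all: "\<forall>i\<in>xH. w i = m"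
  shows "\<forall>i\<in>xH. xout i = Some m"
proof -
  have cH: "card xH = N - xdd" by (rule cardH)
  have sub: "\<And>Q. xH \<subseteq> {j\<in>xH. Q j} \<Longrightarrow> N - t \<le> card {j\<in>cPr N. Q j}"
  proof -
    fix Q assume "xH \<subseteq> {j\<in>xH. Q j}"
    then have "xH \<subseteq> {j\<in>cPr N. Q j}" unfolding cPr_def by auto
    then have "card xH \<le> card {j\<in>cPr N. Q j}" unfolding cPr_def by (intro card_mono) auto
    then show "N - t \<le> card {j\<in>cPr N. Q j}" using cH Dcard by linarith
  qed
  have u: "\<And>i j. i \<in> xH \<Longrightarrow> j \<in> xH \<Longrightarrow> xu1 i j" using u1_same all by metis
  have a1: "\<And>i. i \<in> xH \<Longrightarrow> xs1 i" unfolding cs1_def using sub u by blast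
  have a2: "\<And>i. i \<in> xH \<Longrightarrow> xs2 i"
  proof -
    fix i assume i: "i \<in> xH"
    have "xH \<subseteq> {j\<in>xH. cu2 F N t l w D A i j}" unfolding cu2_def using u[OF i] rec1_hon a1 by auto
    then show "xs2 i" unfolding cs2_def using a1[OF i] sub by blast
  qed
  have a3: "\<And>i. i \<in> xH \<Longrightarrow> xs3 i"
  proof -
    fix i assume i: "i \<in> xH"
    have "xH \<subseteq> {j\<in>xH. cu3 F N t l w D A i j}" unfolding cu3_def cu2_def using u[OF i] rec1_hon rec2_hon a1 a2 by auto
    then show "xs3 i" unfolding cs3_def using a2[OF i] sub by blast
  qed
  have v: "\<forall>i\<in>xH. xvote i = True"
  proof
    fix i assume i: "i \<in> xH"
    have "xH \<subseteq> {j\<in>xH. crec3 F N t l w D A i j}" using rec3_hon a3 by auto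
    then have "N - t \<le> card {j\<in>cPr N. crec3 F N t l w D A i j}" by (rule sub)
    then show "xvote i = True" unfolding cvote_def using Nt by simp
  qed
  show ?thesis
  proof
    fix i assume i: "i \<in> xH"
    have "xdec i" using dec_valid[OF v i] by simp
    then show "xout i = Some m" unfolding core_out_def using a3[OF i] all i by simp
  qed
qed



lemma many_s3:
  assumes d: "\<exists>i\<in>xH. xdec i"
  shows "t + 1 \<le> card {j\<in>xH. xs3 j}"
proof -
  have "\<exists>i0\<in>xH. xvote i0"
  proof (rule ccontr)
    assume "\<not> ?thesis"
    then have "\<forall>i\<in>xH. xvote i = False" by simp
    then have "\<forall>i\<in>xH. xdec i = False" using dec_valid by blast
    then show False using d by simp
  qed
  then obtain i0 where i0: "i0 \<in> xH" "xvote i0" by blast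
  have "{j\<in>xH. crec3 F N t l w D A i0 j} = {j\<in>xH. xs3 j}" using rec3_hon by auto
  then have "card {j\<in>cPr N. crec3 F N t l w D A i0 j} \<le> card {j\<in>xH. xs3 j} + xdd"
    using count_hon[of "crec3 F N t l w D A i0"] by simp
  then show ?thesis using i0(2) Dcard unfolding cvote_def by linarith
qed

lemma newy:
  assumes d: "\<exists>i\<in>xH. xdec i" and j0: "j0 \<in> xH" "xs3 j0" and p: "p \<in> xH"
  shows "cnewy F N t l w D A p = xcw (w j0) p"
proof -
  let ?S = "{j\<in>cPr N. crec3 F N t l w D A p j}"
  let ?f = "\<lambda>j. fst (crcv1 F N t l w D A p j)"
  let ?v = "xcw (w j0) p"
  have T: "?f j = ?v \<and> j \<in> ?S" if "j \<in> xH" "xs3 j" for j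
  proof -
    have "w j = w j0" using L1[OF that(1) j0(1) that(2) j0(2)] .
    moreover have "?f j = cy F N t l w j p" using hon[OF that(1)] unfolding crcv1_def by simp
    moreover have "j \<in> ?S" using that rec3_hon[OF that(1)] unfolding cPr_def by auto
    ultimately show ?thesis by (simp add: cy_eq)
  qed
  have fin: "finite ?S" unfolding cPr_def by auto
  have "{j\<in>xH. xs3 j} \<subseteq> {j\<in>?S. ?f j = ?v}" using T by auto
  moreover have "finite {j\<in>?S. ?f j = ?v}" unfolding cPr_def by simp
  ultimately have c1: "card {j\<in>xH. xs3 j} \<le> card {j\<in>?S. ?f j = ?v}" by (intro card_mono)
  have "{j\<in>?S. ?f j \<noteq> ?v} \<subseteq> D"
  proof
    fix j assume j: "j \<in> {j\<in>?S. ?f j \<noteq> ?v}"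
    show "j \<in> D"
    proof (rule ccontr)
      assume "j \<notin> D"
      then have jH: "j \<in> xH" using j unfolding cPr_def by auto
      then have "xs3 j" using j rec3_hon[OF jH] by auto
      then show False using T[OF jH] j by auto
    qed
  qed
  moreover have "finite D" using Dsub finite_subset by blast
  ultimately have c2: "card {j\<in>?S. ?f j \<noteq> ?v} \<le> xdd" by (intro card_mono)
  have "card {j\<in>?S. ?f j \<noteq> ?v} < card {j\<in>?S. ?f j = ?v}"
    using c1 c2 many_s3[OF d] Dcard by linarith
  then have "mostfreq ?S ?f = ?v" by (rule mostfreq_major[OF fin])
  then show ?thesis unfolding cnewy_def .
qed

lemma z_good:
  assumes d: "\<exists>i\<in>xH. xdec i" and j0: "j0 \<in> xH" "xs3 j0" and i: "i \<in> xH" "\<not> xs3 i" and p: "p \<in> xH"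
  shows "cz F BA N t l w D A i p = xcw (w j0) p"
proof -
  have di: "xdec i" using d dec_cons i(1) by blast
  show ?thesis
  proof (cases "p = i")
    case True
    then show ?thesis unfolding cz_def using newy[OF d j0 i(1)] by simp
  next
    case False
    show ?thesis
    proof (cases "xs3 p")
      case True
      have "w p = w j0" using L1[OF p j0(1) True j0(2)] .
      moreover have "crec3 F N t l w D A i p" using rec3_hon[OF p] True by simp
      moreover have "snd (crcv1 F N t l w D A i p) = cy F N t l w p p" using hon[OF p] unfolding crcv1_def by simp
      ultimately show ?thesis unfolding cz_def using False by (simp add: cy_eq)
    next
      case ns: False
      have nr: "\<not> crec3 F N t l w D A i p" using rec3_hon[OF p] ns by simp
      have dp: "xdec p" using di dec_cons i(1) p by blast
      have "\<not> crec3 F N t l w D A p i" using rec3_hon[OF i(1)] i(2) by simp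
      then have "csnd4 F BA N t l w D A p i" unfolding csnd4_def using dp ns False by simp
      then have "crcv4 F BA N t l w D A i p = cnewy F N t l w D A p" unfolding crcv4_def using hon[OF p] by simp
      then show ?thesis unfolding cz_def using False nr newy[OF d j0 p] by simp
    qed
  qed
qed

lemma core_dec1:
  assumes d: "\<exists>i\<in>xH. xdec i"
  shows "\<exists>j0\<in>xH. \<forall>i\<in>xH. xout i = Some (w j0)"
proof -
  have "0 < card {j\<in>xH. xs3 j}" using many_s3[OF d] by linarith
  then have "{j\<in>xH. xs3 j} \<noteq> {}" using card_gt_0_iff by blast
  then obtain j0 where j0: "j0 \<in> xH" "xs3 j0" by blast
  have "\<forall>i\<in>xH. xout i = Some (w j0)"
  proof
    fix i assume i: "i \<in> xH"
    have di: "xdec i" using d dec_cons i by blast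
    show "xout i = Some (w j0)"
    proof (cases "xs3 i")
      case True
      then show ?thesis unfolding core_out_def using di L1[OF i j0(1) True j0(2)] by simp
    next
      case False
      let ?z = "cz F BA N t l w D A i"
      let ?Q = "\<lambda>m. length m = l \<and> N - t \<le> card {j\<in>cPr N. heval xR xk j (enc xc m) = ?z j}"
      have zg: "\<forall>p\<in>xH. xcw (w j0) p = ?z p" using z_good[OF d j0 i False] by simp
      have "xH \<subseteq> {j\<in>cPr N. heval xR xk j (enc xc (w j0)) = ?z j}" using zg unfolding cPr_def by auto
      then have "card xH \<le> card {j\<in>cPr N. heval xR xk j (enc xc (w j0)) = ?z j}"
        unfolding cPr_def by (intro card_mono) auto
      then have Q0: "?Q (w j0)" using hon[OF j0(1)] cardH Dcard by auto
      then have ex: "\<exists>m. ?Q m" by blast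
      have cd: "cdecode F N t l ?z = Some (SOME m. ?Q m)" unfolding cdecode_def using ex by simp
      have Qs: "?Q (SOME m. ?Q m)" using someI_ex[OF ex] .
      have "(SOME m. ?Q m) = w j0"
      proof (rule decode_unique)
        show "length (w j0) = l" using hon[OF j0(1)] by simp
        show "length (SOME m. ?Q m) = l" using Qs by simp
        show "{j\<in>cPr N. heval xR xk j (enc xc (SOME m. ?Q m)) = ?z j} \<subseteq> {1..N}" unfolding cPr_def by auto
        show "N - t \<le> card {j\<in>cPr N. heval xR xk j (enc xc (SOME m. ?Q m)) = ?z j}" using Qs by simp
        show "\<forall>p\<in>{j\<in>cPr N. heval xR xk j (enc xc (SOME m. ?Q m)) = ?z j}. xcw (SOME m. ?Q m) p = ?z p" by simp
        show "\<forall>p\<in>xH. xcw (w j0) p = ?z p" by (rule zg)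
      qed
      then show ?thesis unfolding core_out_def using di False cd by simp
    qed
  qed
  then show ?thesis using j0 by blast
qed

lemma core_cons:
  assumes "i \<in> xH" "j \<in> xH"
  shows "xout i = xout j"
proof (cases "\<exists>i\<in>xH. xdec i")
  case True
  then show ?thesis using core_dec1 assms by metis
next
  case False
  then show ?thesis unfolding core_out_def using assms by simp
qed


lemma outer_decode:
  assumes r: "\<forall>j\<in>xH. r j = map_option (\<lambda>m. heval (F xc) xk j (enc xc m)) (xout j)" and i0: "i0 \<in> xH"
  shows "(if \<exists>m. length m = l \<and> N - t \<le> card {j\<in>{1..N}. r j = Some (heval (F xc) xk j (enc xc m))}
          then Some (SOME m. length m = l \<and> N - t \<le> card {j\<in>{1..N}. r j = Some (heval (F xc) xk j (enc xc m))})
          else None) = xout i0"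
proof -
  have RF: "F xc = xR" unfolding cR_def by simp
  have r': "\<forall>j\<in>xH. r j = map_option (\<lambda>m. xcw m j) (xout i0)" using r core_cons[OF _ i0] RF by simp
  let ?Q = "\<lambda>m. length m = l \<and> N - t \<le> card {j\<in>{1..N}. r j = Some (xcw m j)}"
  have fD: "finite D" using Dsub finite_subset by blast
  show ?thesis
  proof (cases "xout i0")
    case None
    have "\<not> ?Q m" for m
    proof
      assume q: "?Q m"
      have "{j\<in>{1..N}. r j = Some (xcw m j)} \<subseteq> D"
      proof
        fix x assume x: "x \<in> {j\<in>{1..N}. r j = Some (xcw m j)}"
        show "x \<in> D"
        proof (rule ccontr)
          assume "x \<notin> D"
          then have "x \<in> xH" using x by auto
          then have "r x = None" using r' None by simp
          then show False using x by simp
        qed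
      qed
      then have "card {j\<in>{1..N}. r j = Some (xcw m j)} \<le> xdd" using fD by (intro card_mono)
      then show False using q Nt Dcard by linarith
    qed
    then show ?thesis using None RF by auto
  next
    case (Some m0)
    have lm0: "length m0 = l" using out_len[OF i0 Some] .
    have rr: "\<forall>j\<in>xH. r j = Some (xcw m0 j)" using r' Some by simp
    have "xH \<subseteq> {j\<in>{1..N}. r j = Some (xcw m0 j)}" using rr by auto
    then have "card xH \<le> card {j\<in>{1..N}. r j = Some (xcw m0 j)}" by (intro card_mono) auto
    then have Q0: "?Q m0" using lm0 cardH Dcard by auto
    then have ex: "\<exists>m. ?Q m" by blast
    have Qs: "?Q (SOME m. ?Q m)" using someI_ex[OF ex] .
    let ?z = "\<lambda>j. case r j of Some v \<Rightarrow> v | None \<Rightarrow> 0"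
    have "(SOME m. ?Q m) = m0"
    proof (rule decode_unique[where z = ?z])
      show "length m0 = l" by (rule lm0)
      show "length (SOME m. ?Q m) = l" using Qs by simp
      show "{j\<in>{1..N}. r j = Some (xcw (SOME m. ?Q m) j)} \<subseteq> {1..N}" by auto
      show "N - t \<le> card {j\<in>{1..N}. r j = Some (xcw (SOME m. ?Q m) j)}" using Qs by simp
      show "\<forall>p\<in>{j\<in>{1..N}. r j = Some (xcw (SOME m. ?Q m) j)}. xcw (SOME m. ?Q m) p = ?z p" by auto
      show "\<forall>p\<in>xH. xcw m0 p = ?z p" using rr by auto
    qed
    then show ?thesis using ex Some RF by simp
  qed
qed

end


lemma arith_G:
  fixes n N l tt k c L Lm K0 M :: real
  assumes N0: "0 \<le> N" and Nn: "N \<le> n" and NK: "N \<le> K0 * tt" and tk: "tt \<le> 5 * k" and k1: "k \<ge> 1"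
    and c0: "0 \<le> c" and cb: "c \<le> l / k + 2 * L + 1" and L0: "0 \<le> L" and LM: "L \<le> M * Lm"
    and Lm1: "Lm \<ge> 1" and l0: "0 \<le> l" and K1: "K0 \<ge> 1" and tt1: "tt \<ge> 1" and M0: "M \<ge> 0"
  shows "N * (3 * c * N + 3 * N) \<le> 15 * K0 * (n * l) + (6 * K0 * M + 6 * K0) * (n * tt * Lm)"
    and "N * (c + 1) * n \<le> 5 * K0 * (n * l) + (2 * K0 * M + 2 * K0) * (n * tt * Lm)"
proof -
  have n0: "0 \<le> n" using N0 Nn by linarith
  have Nk: "N / k \<le> 5 * K0"
  proof -
    have "N \<le> K0 * (5 * k)" using NK tk K1 by (meson dual_order.trans mult_left_mono zero_le_one order_trans)
    then show ?thesis using k1 by (simp add: divide_le_eq algebra_simps)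
  qed
  have Nk0: "0 \<le> N / k" using N0 k1 by simp
  have e1: "N / k * l \<le> 5 * K0 * l" using Nk l0 by (rule mult_right_mono)
  have Nkl: "0 \<le> N / k * l" using Nk0 l0 by (rule mult_nonneg_nonneg)
  have e2: "N * (N / k * l) \<le> n * (5 * K0 * l)" by (rule mult_mono[OF Nn e1 n0 Nkl])
  have Ktt: "0 \<le> K0 * tt" using K1 tt1 by simp
  have ML0: "0 \<le> M * Lm" using M0 Lm1 by simp
  have e3: "N * L \<le> (K0 * tt) * (M * Lm)" using NK LM N0 L0 Ktt by (intro mult_mono) auto
  have NL0: "0 \<le> N * L" using N0 L0 by (rule mult_nonneg_nonneg)
  have e4: "N * (N * L) \<le> n * ((K0 * tt) * (M * Lm))" by (rule mult_mono[OF Nn e3 n0 NL0])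
  have e5: "K0 * tt \<le> K0 * tt * Lm" using Ktt Lm1 by (simp add: mult_le_cancel_left1)
  have e6: "N \<le> K0 * tt * Lm" using NK e5 by linarith
  have e7: "N * N \<le> n * (K0 * tt * Lm)" by (rule mult_mono[OF Nn e6 n0 N0])
  have e8: "N * c \<le> N * (l / k + 2 * L + 1)" using cb N0 by (rule mult_left_mono)
  have e9: "N * (l / k + 2 * L + 1) = N / k * l + 2 * (N * L) + N" by (simp add: algebra_simps)
  have e10: "N * (N * c) \<le> N * (N / k * l + 2 * (N * L) + N)" using e8 e9 N0 by (metis mult_left_mono)
  have e11: "N * (N / k * l + 2 * (N * L) + N) = N * (N / k * l) + 2 * (N * (N * L)) + N * N" by (simp add: algebra_simps)
  have eq1: "N * (3 * c * N + 3 * N) = 3 * (N * (N * c)) + 3 * (N * N)" by (simp add: algebra_simps)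
  have eq2: "n * (5 * K0 * l) = 5 * K0 * (n * l)" by (simp add: algebra_simps)
  have eq3: "n * ((K0 * tt) * (M * Lm)) = K0 * M * (n * tt * Lm)" by (simp add: algebra_simps)
  have eq4: "n * (K0 * tt * Lm) = K0 * (n * tt * Lm)" by (simp add: algebra_simps)
  show "N * (3 * c * N + 3 * N) \<le> 15 * K0 * (n * l) + (6 * K0 * M + 6 * K0) * (n * tt * Lm)"
    using eq1 e10 e11 e2 e4 e7 eq2 eq3 eq4 by (simp add: algebra_simps)
  have f1: "c + 1 \<le> l / k + 2 * L + 2" using cb by simp
  have f2: "N * (c + 1) \<le> N * (l / k + 2 * L + 2)" using f1 N0 by (rule mult_left_mono)
  have f3: "N * (l / k + 2 * L + 2) = N / k * l + 2 * (N * L) + 2 * N" by (simp add: algebra_simps)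
  have f4: "N / k * l + 2 * (N * L) + 2 * N \<le> 5 * K0 * l + 2 * ((K0 * tt) * (M * Lm)) + 2 * (K0 * tt * Lm)"
    using e1 e3 e6 by linarith
  have f5: "N * (c + 1) * n \<le> (5 * K0 * l + 2 * ((K0 * tt) * (M * Lm)) + 2 * (K0 * tt * Lm)) * n"
    using f2 f3 f4 n0 by (metis mult_right_mono order_trans)
  have f6: "(5 * K0 * l + 2 * ((K0 * tt) * (M * Lm)) + 2 * (K0 * tt * Lm)) * n = 5 * K0 * (n * l) + (2 * K0 * M + 2 * K0) * (n * tt * Lm)"
    by (simp add: algebra_simps)
  show "N * (c + 1) * n \<le> 5 * K0 * (n * l) + (2 * K0 * M + 2 * K0) * (n * tt * Lm)"
    using f5 f6 by simp
qed



lemma core_bits_le: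
  "core_bits F BA N t l w D A \<le> N * (3 * cval N t l * N + 3 * N) + snd (snd (cBA F BA N t l w D A))"
proof -
  let ?c = "cval N t l"
  let ?g = "\<lambda>i. 2 * ?c * (N - 1) + (N - 1)
     + (if csnd2 F N t l w D A i then N - 1 else 0) + (if csnd3 F N t l w D A i then N - 1 else 0)
     + ?c * card {j\<in>cPr N. csnd4 F BA N t l w D A i j}"
  have g: "?g i \<le> 3 * ?c * N + 3 * N" for i
  proof -
    have "card {j\<in>cPr N. csnd4 F BA N t l w D A i j} \<le> card (cPr N)" unfolding cPr_def by (intro card_mono) auto
    then have "?c * card {j\<in>cPr N. csnd4 F BA N t l w D A i j} \<le> ?c * N" unfolding cPr_def by simp
    moreover have "2 * ?c * (N - 1) \<le> 2 * ?c * N" by simp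
    moreover have "(if csnd2 F N t l w D A i then N - 1 else 0) \<le> N" by simp
    moreover have "(if csnd3 F N t l w D A i then N - 1 else 0) \<le> N" by simp
    moreover have "N - 1 \<le> N" by simp
    ultimately show ?thesis by linarith
  qed
  have "sum ?g (cPr N - D) \<le> card (cPr N - D) * (3 * ?c * N + 3 * N)"
    using sum_bounded_above[of "cPr N - D" ?g "3 * ?c * N + 3 * N"] g by simp
  also have "\<dots> \<le> N * (3 * ?c * N + 3 * N)"
  proof -
    have "card (cPr N - D) \<le> card (cPr N)" unfolding cPr_def by (intro card_mono) auto
    then show ?thesis unfolding cPr_def by simp
  qed
  finally show ?thesis unfolding core_bits_def by simp
qed

lemma cval_upper: "real (cval N t l) \<le> real l / real (kval t) + 2 * log 2 (real N + 1) + 1"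
proof -
  let ?L = "log 2 (real N + 1)"
  let ?k = "real (kval t)"
  let ?x = "max (real l) ((real t / 5 + 1) * ?L) / ?k"
  have k: "?k \<ge> 1" using kval_pos[of t] by simp
  have L: "?L \<ge> 0" by simp
  have x0: "?x \<ge> 0" using k by (simp add: le_max_iff_disj)
  have "real (cval N t l) = real_of_int \<lceil>?x\<rceil>" unfolding cval_def using x0 by simp
  also have "\<dots> \<le> ?x + 1" by linarith
  also have "?x \<le> (real l + (real t / 5 + 1) * ?L) / ?k"
    using k L by (intro divide_right_mono) auto
  also have "\<dots> = real l / ?k + (real t / 5 + 1) * ?L / ?k" by (simp add: add_divide_distrib)
  also have "(real t / 5 + 1) * ?L / ?k \<le> 2 * ?L"
  proof -
    have "real t / 5 + 1 \<le> 2 * ?k" using kval_real(2)[of t] k by linarith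
    then have "(real t / 5 + 1) * ?L \<le> (2 * ?k) * ?L" using L by (rule mult_right_mono)
    then show ?thesis using k by (simp add: field_simps)
  qed
  finally show ?thesis by simp
qed

lemma tk: "max 1 (real t) \<le> 5 * real (kval t)"
  using kval_real(2)[of t] kval_pos[of t] by simp

definition Lam :: "nat \<Rightarrow> real" where "Lam t = (if 2 \<le> t then log 2 (real t) else 1)"

lemma Lam_ge: "Lam t \<ge> 1"
proof (cases "2 \<le> t")
  case True
  then have "log 2 2 \<le> log 2 (real t)" by simp
  then show ?thesis unfolding Lam_def using True by simp
qed (simp add: Lam_def)

lemma Phi_ge:
  assumes "1 \<le> l"
  shows "real n * max 1 (real t) * Lam t \<le> max (real n * real l) (real n * real t * log 2 (real t))"
    "real n * real l \<le> max (real n * real l) (real n * real t * log 2 (real t))"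
proof -
  show "real n * real l \<le> max (real n * real l) (real n * real t * log 2 (real t))" by simp
  show "real n * max 1 (real t) * Lam t \<le> max (real n * real l) (real n * real t * log 2 (real t))"
  proof (cases "2 \<le> t")
    case True
    then show ?thesis unfolding Lam_def by simp
  next
    case False
    then have "real n * max 1 (real t) * Lam t = real n" unfolding Lam_def by simp
    also have "\<dots> = real n * 1" by simp
    also have "\<dots> \<le> real n * real l" using assms by (intro mult_left_mono) auto
    finally show ?thesis by simp
  qed
qed

lemma log_bound:
  assumes K: "K0 \<ge> 1" and N: "real N \<le> K0 * max 1 (real t)"
  shows "log 2 (real N + 1) \<le> (log 2 (K0 + 1) + 1) * Lam t"
proof -
  let ?t = "max 1 (real t)"
  have "real N + 1 \<le> K0 * ?t + ?t" using N by simp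
  also have "\<dots> = (K0 + 1) * ?t" by (simp add: algebra_simps)
  finally have a: "real N + 1 \<le> (K0 + 1) * ?t" .
  have "log 2 (real N + 1) \<le> log 2 ((K0 + 1) * ?t)" using a by simp
  also have "\<dots> = log 2 (K0 + 1) + log 2 ?t" using K by (simp add: log_mult)
  also have "log 2 ?t \<le> Lam t" unfolding Lam_def by (cases "2 \<le> t") auto
  also have "log 2 (K0 + 1) \<le> log 2 (K0 + 1) * Lam t"
  proof -
    have "log 2 (K0 + 1) \<ge> 0" using K by simp
    then show ?thesis using Lam_ge[of t] by (simp add: mult_le_cancel_left1)
  qed
  finally show ?thesis by (simp add: algebra_simps)
qed


lemma cool_correct:
  fixes F :: "nat \<Rightarrow> nat ring" and C0 :: real
    and BA :: "nat \<Rightarrow> nat \<Rightarrow> nat set \<Rightarrow> (nat \<Rightarrow> bool) \<Rightarrow> 'a \<Rightarrow> (nat \<Rightarrow> bool) \<times> nat \<times> nat"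
    and w :: "nat \<Rightarrow> bool list" and A :: "'a adv"
  assumes GF: "\<forall>c\<ge>1. field (F c) \<and> carrier (F c) = {..<2 ^ c} \<and> \<zero>\<^bsub>F c\<^esub> = 0"
    and BA: "binary_BA BA"
    and h: "3 * t + 1 \<le> n" "1 \<le> l" "D \<subseteq> {1..n}" "card D \<le> t" "\<forall>i\<in>{1..n} - D. length (w i) = l"
  shows "(\<forall>i\<in>{1..n} - D. \<forall>j\<in>{1..n} - D.
          cool_out F C0 BA n t l w D A i = cool_out F C0 BA n t l w D A j) \<and>
       (\<forall>m. (\<forall>i\<in>{1..n} - D. w i = m) \<longrightarrow>
          (\<forall>i\<in>{1..n} - D. cool_out F C0 BA n t l w D A i = Some m))"
proof (cases "real n \<le> C0 * real t")
  case True
  then have co: "cool_out F C0 BA n t l w D A i = core_out F BA n t l w D A i" for i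
    unfolding cool_out_def by simp
  show ?thesis unfolding co using core_cons[OF GF BA h] core_valid[OF GF BA h] by blast
next
  case False
  define n' where "n' = 3 * t + 1"
  define D' where "D' = D \<inter> {1..n'}"
  have nn: "n' \<le> n" using h(1) unfolding n'_def by simp
  have h': "3 * t + 1 \<le> n'" "1 \<le> l" "D' \<subseteq> {1..n'}" "card D' \<le> t" "\<forall>i\<in>{1..n'} - D'. length (w i) = l"
  proof -
    show "3 * t + 1 \<le> n'" unfolding n'_def by simp
    show "1 \<le> l" by (rule h(2))
    show "D' \<subseteq> {1..n'}" unfolding D'_def by auto
    have "card D' \<le> card D" unfolding D'_def using h(3) by (intro card_mono) (auto intro: finite_subset)
    then show "card D' \<le> t" using h(4) by simp
    show "\<forall>i\<in>{1..n'} - D'. length (w i) = l" using h(5) nn unfolding D'_def by auto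
  qed
  let ?o = "core_out F BA n' t l w D' A"
  have "card ({1..n'} - D') = n' - card D'" using h'(3) by (simp add: card_Diff_subset finite_subset)
  then have "0 < card ({1..n'} - D')" using h'(4) unfolding n'_def by linarith
  then have "{1..n'} - D' \<noteq> {}" using card_gt_0_iff by blast
  then obtain i0 where i0: "i0 \<in> {1..n'} - D'" by blast
  have key: "cool_out F C0 BA n t l w D A i = ?o i0" if i: "i \<in> {1..n} - D" for i
  proof (cases "i \<le> n'")
    case True
    then have "i \<in> {1..n'} - D'" using i unfolding D'_def by auto
    then have "?o i = ?o i0" using core_cons[OF GF BA h' _ i0] by blast
    moreover have "i \<le> 3 * t + 1" using True unfolding n'_def .
    ultimately show ?thesis unfolding cool_out_def Let_def using False
      by (simp only: n'_def[symmetric] D'_def[symmetric] if_False if_True)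
  next
    case ni: False
    let ?r = "\<lambda>j. if j \<in> D then map_option (san (F (cval n' t l))) (a5 A j i)
                  else map_option (\<lambda>m. heval (F (cval n' t l)) (kval t) j (enc (cval n' t l) m)) (?o j)"
    have r: "\<forall>j\<in>{1..n'} - D'. ?r j = map_option (\<lambda>m. heval (F (cval n' t l)) (kval t) j (enc (cval n' t l) m)) (?o j)"
      unfolding D'_def by auto
    have "(if \<exists>m. length m = l \<and> n' - t \<le> card {j\<in>{1..n'}. ?r j = Some (heval (F (cval n' t l)) (kval t) j (enc (cval n' t l) m))}
          then Some (SOME m. length m = l \<and> n' - t \<le> card {j\<in>{1..n'}. ?r j = Some (heval (F (cval n' t l)) (kval t) j (enc (cval n' t l) m))})
          else None) = ?o i0"
      by (rule outer_decode[OF GF BA h' r i0])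
    moreover have "\<not> i \<le> 3 * t + 1" using ni unfolding n'_def .
    ultimately show ?thesis unfolding cool_out_def Let_def using False
      by (simp only: n'_def[symmetric] D'_def[symmetric] if_False) 
  qed
  have valid: "\<forall>m. (\<forall>i\<in>{1..n} - D. w i = m) \<longrightarrow> (\<forall>i\<in>{1..n} - D. cool_out F C0 BA n t l w D A i = Some m)"
  proof (intro allI impI ballI)
    fix m i assume all: "\<forall>i\<in>{1..n} - D. w i = m" and i: "i \<in> {1..n} - D"
    have "\<forall>i\<in>{1..n'} - D'. w i = m" using all nn unfolding D'_def by auto
    then have "?o i0 = Some m" using core_valid[OF GF BA h'] i0 by blast
    then show "cool_out F C0 BA n t l w D A i = Some m" using key[OF i] by simp
  qed
  show ?thesis using key valid by simp
qed


lemma BA_bound: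
  fixes Cb :: real
  assumes Cb: "\<forall>N t D v a. 3 * t + 1 \<le> N \<and> D \<subseteq> {1..N} \<and> card D \<le> t \<longrightarrow>
     (case BA N t D v a of (d, r, b) \<Rightarrow>
        (\<forall>i\<in>{1..N} - D. \<forall>j\<in>{1..N} - D. d i = d j) \<and>
        (\<forall>x. (\<forall>i\<in>{1..N} - D. v i = x) \<longrightarrow> (\<forall>i\<in>{1..N} - D. d i = x)) \<and>
        real r \<le> Cb * max 1 (real t) \<and>
        real b \<le> Cb * real N * max 1 (real t))"
    and h: "3 * t + 1 \<le> N" "D \<subseteq> {1..N}" "card D \<le> t"
  shows "real (fst (snd (BA N t D v a))) \<le> Cb * max 1 (real t) \<and> real (snd (snd (BA N t D v a))) \<le> Cb * real N * max 1 (real t)"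
proof -
  have pre: "3 * t + 1 \<le> N \<and> D \<subseteq> {1..N} \<and> card D \<le> t" using h by (intro conjI)
  have C1: "case BA N t D v a of (d, r, b) \<Rightarrow>
        (\<forall>i\<in>{1..N} - D. \<forall>j\<in>{1..N} - D. d i = d j) \<and>
        (\<forall>x. (\<forall>i\<in>{1..N} - D. v i = x) \<longrightarrow> (\<forall>i\<in>{1..N} - D. d i = x)) \<and>
        real r \<le> Cb * max 1 (real t) \<and>
        real b \<le> Cb * real N * max 1 (real t)"
    by (rule mp[OF Cb[THEN spec[of _ N], THEN spec[of _ t], THEN spec[of _ D], THEN spec[of _ v], THEN spec[of _ a]] pre])
  obtain dv r b where eq: "BA N t D v a = (dv, r, b)" by (cases "BA N t D v a") auto
  have "real r \<le> Cb * max 1 (real t) \<and> real b \<le> Cb * real N * max 1 (real t)"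
    using C1 unfolding eq by (simp only: prod.case)
  then show ?thesis unfolding eq by simp
qed

lemma bits_core_real:
  fixes F :: "nat \<Rightarrow> nat ring"
    and BA :: "nat \<Rightarrow> nat \<Rightarrow> nat set \<Rightarrow> (nat \<Rightarrow> bool) \<Rightarrow> 'a \<Rightarrow> (nat \<Rightarrow> bool) \<times> nat \<times> nat"
    and Cb K0 :: real and A :: "'a adv"
  assumes Cb: "\<forall>N t D v a. 3 * t + 1 \<le> N \<and> D \<subseteq> {1..N} \<and> card D \<le> t \<longrightarrow>
     (case BA N t D v a of (d, r, b) \<Rightarrow>
        (\<forall>i\<in>{1..N} - D. \<forall>j\<in>{1..N} - D. d i = d j) \<and>
        (\<forall>x. (\<forall>i\<in>{1..N} - D. v i = x) \<longrightarrow> (\<forall>i\<in>{1..N} - D. d i = x)) \<and>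
        real r \<le> Cb * max 1 (real t) \<and>
        real b \<le> Cb * real N * max 1 (real t))"
    and h: "3 * t + 1 \<le> N" "D \<subseteq> {1..N}" "card D \<le> t"
    and Nn: "N \<le> n" and NK: "real N \<le> K0 * max 1 (real t)" and K1: "K0 \<ge> 1" and l1: "1 \<le> l"
  shows "real (core_bits F BA N t l w D A) \<le> 15 * K0 * (real n * real l)
      + (6 * K0 * (log 2 (K0 + 1) + 1) + 6 * K0 + max Cb 0) * (real n * max 1 (real t) * Lam t)"
proof -
  let ?tt = "max 1 (real t)"
  let ?X = "real n * ?tt * Lam t"
  let ?M = "log 2 (K0 + 1) + 1"
  have b: "real (snd (snd (cBA F BA N t l w D A))) \<le> Cb * real N * ?tt"
    unfolding cBA_def using BA_bound[OF Cb h] by simp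
  have b2: "Cb * real N * ?tt \<le> max Cb 0 * ?X"
  proof -
    have "Cb * real N * ?tt \<le> max Cb 0 * (real N * ?tt)"
      by (simp add: mult.assoc mult_right_mono)
    also have "real N * ?tt \<le> ?X"
    proof -
      have "real N * ?tt \<le> real n * ?tt" using Nn by (simp add: mult_right_mono)
      also have "\<dots> \<le> real n * ?tt * Lam t"
        using Lam_ge[of t] mult_left_mono[of 1 "Lam t" "real n * ?tt"] by simp
      finally show ?thesis .
    qed
    then have "max Cb 0 * (real N * ?tt) \<le> max Cb 0 * ?X" by (simp add: mult_left_mono)
    finally show ?thesis .
  qed
  have M0: "?M \<ge> 0" using K1 by simp
  have main: "real N * (3 * real (cval N t l) * real N + 3 * real N) \<le> 15 * K0 * (real n * real l) + (6 * K0 * ?M + 6 * K0) * (real n * ?tt * Lam t)"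
  proof (rule arith_G(1))
    show "0 \<le> real N" by simp
    show "real N \<le> real n" using Nn by simp
    show "real N \<le> K0 * ?tt" by (rule NK)
    show "?tt \<le> 5 * real (kval t)" by (rule tk)
    show "real (kval t) \<ge> 1" using kval_pos[of t] by simp
    show "0 \<le> real (cval N t l)" by simp
    show "real (cval N t l) \<le> real l / real (kval t) + 2 * log 2 (real N + 1) + 1" by (rule cval_upper)
    show "0 \<le> log 2 (real N + 1)" by simp
    show "log 2 (real N + 1) \<le> ?M * Lam t" by (rule log_bound[OF K1 NK])
    show "Lam t \<ge> 1" by (rule Lam_ge)
    show "0 \<le> real l" by simp
    show "K0 \<ge> 1" by (rule K1)
    show "?tt \<ge> 1" by simp
    show "?M \<ge> 0" by (rule M0)
  qed
  have nb: "core_bits F BA N t l w D A \<le> N * (3 * cval N t l * N + 3 * N) + snd (snd (cBA F BA N t l w D A))"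
    by (rule core_bits_le)
  then have "real (core_bits F BA N t l w D A) \<le> real (N * (3 * cval N t l * N + 3 * N)) + real (snd (snd (cBA F BA N t l w D A)))"
    by (metis of_nat_add of_nat_le_iff)
  also have "real (N * (3 * cval N t l * N + 3 * N)) = real N * (3 * real (cval N t l) * real N + 3 * real N)" by simp
  finally show ?thesis using main b b2 by (simp add: algebra_simps)
qed


theorem theorem1:
  fixes F :: "nat \<Rightarrow> nat ring"
    and C0 :: real
    and BA :: "nat \<Rightarrow> nat \<Rightarrow> nat set \<Rightarrow> (nat \<Rightarrow> bool) \<Rightarrow> 'a \<Rightarrow> (nat \<Rightarrow> bool) \<times> nat \<times> nat"
  assumes GF: "\<forall>c\<ge>1. field (F c) \<and> carrier (F c) = {..<2 ^ c} \<and> \<zero>\<^bsub>F c\<^esub> = 0"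
    and BA: "binary_BA BA"
    and C0: "C0 > 0"
  shows "\<exists>C::real. \<forall>n t l (w :: nat \<Rightarrow> bool list) D (A :: 'a adv).
     3 * t + 1 \<le> n \<and> 1 \<le> l \<and> D \<subseteq> {1..n} \<and> card D \<le> t \<and>
     (\<forall>i\<in>{1..n} - D. length (w i) = l) \<longrightarrow>
       (\<forall>i\<in>{1..n} - D. \<forall>j\<in>{1..n} - D.
          cool_out F C0 BA n t l w D A i = cool_out F C0 BA n t l w D A j) \<and>
       (\<forall>m. (\<forall>i\<in>{1..n} - D. w i = m) \<longrightarrow>
          (\<forall>i\<in>{1..n} - D. cool_out F C0 BA n t l w D A i = Some m)) \<and>
       real (cool_rounds F C0 BA n t l w D A) \<le> C * max 1 (real t) \<and>
       real (cool_bits F C0 BA n t l w D A)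
         \<le> C * max (real n * real l) (real n * real t * log 2 (real t))"
proof -
  have "\<exists>Cb::real. \<forall>N t D v a. 3 * t + 1 \<le> N \<and> D \<subseteq> {1..N} \<and> card D \<le> t \<longrightarrow>
     (case BA N t D v a of (d, r, b) \<Rightarrow>
        (\<forall>i\<in>{1..N} - D. \<forall>j\<in>{1..N} - D. d i = d j) \<and>
        (\<forall>x. (\<forall>i\<in>{1..N} - D. v i = x) \<longrightarrow> (\<forall>i\<in>{1..N} - D. d i = x)) \<and>
        real r \<le> Cb * max 1 (real t) \<and>
        real b \<le> Cb * real N * max 1 (real t))"
    using BA unfolding binary_BA_def .
  then obtain Cb :: real where Cb: "\<forall>N t D v a. 3 * t + 1 \<le> N \<and> D \<subseteq> {1..N} \<and> card D \<le> t \<longrightarrow>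
     (case BA N t D v a of (d, r, b) \<Rightarrow>
        (\<forall>i\<in>{1..N} - D. \<forall>j\<in>{1..N} - D. d i = d j) \<and>
        (\<forall>x. (\<forall>i\<in>{1..N} - D. v i = x) \<longrightarrow> (\<forall>i\<in>{1..N} - D. d i = x)) \<and>
        real r \<le> Cb * max 1 (real t) \<and>
        real b \<le> Cb * real N * max 1 (real t))" ..
  define Cp where "Cp = max Cb 0"
  define K0 where "K0 = C0 + 4"
  define M where "M = log 2 (K0 + 1) + 1"
  define C1 where "C1 = 20 * K0 + 8 * K0 * M + 8 * K0 + Cp"
  define C where "C = 2 * C1 + 6 + Cp"
  have K1: "K0 \<ge> 1" unfolding K0_def using C0 by simp
  have M0: "M \<ge> 0" unfolding M_def using K1 by simp
  have Cp0: "Cp \<ge> 0" unfolding Cp_def by simp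
  have C10: "C1 \<ge> 0" unfolding C1_def using K1 M0 Cp0 by simp
  show ?thesis
  proof (rule exI[of _ C], intro allI impI)
    fix n t l and w :: "nat \<Rightarrow> bool list" and D and A :: "'a adv"
    assume hyp: "3 * t + 1 \<le> n \<and> 1 \<le> l \<and> D \<subseteq> {1..n} \<and> card D \<le> t \<and> (\<forall>i\<in>{1..n} - D. length (w i) = l)"
    then have h: "3 * t + 1 \<le> n" "1 \<le> l" "D \<subseteq> {1..n}" "card D \<le> t" "\<forall>i\<in>{1..n} - D. length (w i) = l"
      by auto
    let ?tt = "max 1 (real t)"
    let ?X = "real n * ?tt * Lam t"
    let ?Phi = "max (real n * real l) (real n * real t * log 2 (real t))"
    have corr: "(\<forall>i\<in>{1..n} - D. \<forall>j\<in>{1..n} - D.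
          cool_out F C0 BA n t l w D A i = cool_out F C0 BA n t l w D A j) \<and>
       (\<forall>m. (\<forall>i\<in>{1..n} - D. w i = m) \<longrightarrow>
          (\<forall>i\<in>{1..n} - D. cool_out F C0 BA n t l w D A i = Some m))"
      by (rule cool_correct[OF GF BA h])
    define n' where "n' = 3 * t + 1"
    define D' where "D' = D \<inter> {1..n'}"
    have hD': "D' \<subseteq> {1..n'}" "card D' \<le> t"
    proof -
      show "D' \<subseteq> {1..n'}" unfolding D'_def by auto
      have "card D' \<le> card D" unfolding D'_def using h(3) by (intro card_mono) (auto intro: finite_subset)
      then show "card D' \<le> t" using h(4) by simp
    qed
    have nn: "n' \<le> n" using h(1) unfolding n'_def by simp
    have n'K: "real n' \<le> K0 * ?tt"
    proof -
      have "real n' \<le> 4 * ?tt" unfolding n'_def by simp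
      also have "\<dots> \<le> K0 * ?tt" unfolding K0_def using C0 by (intro mult_right_mono) auto
      finally show ?thesis .
    qed
    have tt1: "?tt \<ge> 1" by simp
    have phi1: "?X \<le> ?Phi" "real n * real l \<le> ?Phi" using Phi_ge[OF h(2)] by auto
    have rounds_core: "real (core_rounds F BA N t l w D'' A) \<le> 5 + Cp * ?tt"
      if "3 * t + 1 \<le> N" "D'' \<subseteq> {1..N}" "card D'' \<le> t" for N D''
    proof -
      have "real (fst (snd (cBA F BA N t l w D'' A))) \<le> Cb * ?tt"
        unfolding cBA_def using BA_bound[OF Cb that] by simp
      also have "\<dots> \<le> Cp * ?tt" unfolding Cp_def by (intro mult_right_mono) auto
      finally show ?thesis unfolding core_rounds_def by simp
    qed
    have rounds: "real (cool_rounds F C0 BA n t l w D A) \<le> C * ?tt"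
    proof -
      have "real (cool_rounds F C0 BA n t l w D A) \<le> 6 + Cp * ?tt"
      proof (cases "real n \<le> C0 * real t")
        case True
        then show ?thesis unfolding cool_rounds_def using rounds_core[OF h(1,3,4)] by simp
      next
        case False
        have "real (core_rounds F BA n' t l w D' A) \<le> 5 + Cp * ?tt"
          using rounds_core[of n' D'] hD' unfolding n'_def by simp
        then show ?thesis unfolding cool_rounds_def using False n'_def D'_def by simp
      qed
      also have "\<dots> \<le> (6 + Cp) * ?tt" using tt1 by (simp add: algebra_simps)
      also have "\<dots> \<le> C * ?tt" unfolding C_def using C10 by (intro mult_right_mono) auto
      finally show ?thesis .
    qed
    have bits0: "real (cool_bits F C0 BA n t l w D A) \<le> C1 * (real n * real l) + C1 * ?X"
    proof (cases "real n \<le> C0 * real t")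
      case True
      have nK: "real n \<le> K0 * ?tt"
      proof -
        have "C0 * real t \<le> C0 * ?tt" using C0 by (intro mult_left_mono) auto
        also have "\<dots> \<le> K0 * ?tt" unfolding K0_def by (intro mult_right_mono) auto
        finally show ?thesis using True by simp
      qed
      have "real (core_bits F BA n t l w D A) \<le> 15 * K0 * (real n * real l) + (6 * K0 * M + 6 * K0 + Cp) * ?X"
        using bits_core_real[OF Cb h(1,3,4) order_refl nK K1 h(2)] unfolding M_def Cp_def by simp
      also have "\<dots> \<le> C1 * (real n * real l) + C1 * ?X"
      proof -
        have a: "15 * K0 * (real n * real l) \<le> C1 * (real n * real l)"
          unfolding C1_def using K1 M0 Cp0 by (intro mult_right_mono) auto
        have X0: "?X \<ge> 0" using Lam_ge[of t] by simp
        have b: "(6 * K0 * M + 6 * K0 + Cp) * ?X \<le> C1 * ?X"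
          unfolding C1_def using K1 M0 Cp0 X0 by (intro mult_right_mono) auto
        show ?thesis using a b by linarith
      qed
      finally show ?thesis unfolding cool_bits_def using True by simp
    next
      case False
      let ?c = "cval n' t l"
      have cb: "real (core_bits F BA n' t l w D' A) \<le> 15 * K0 * (real n * real l) + (6 * K0 * M + 6 * K0 + Cp) * ?X"
        using bits_core_real[OF Cb _ hD' nn n'K K1 h(2)] unfolding M_def Cp_def n'_def by simp
      have sum: "(\<Sum>j\<in>{1..n'} - D. (?c + 1) * (n - n')) \<le> n' * ((?c + 1) * n)"
      proof -
        have "(\<Sum>j\<in>{1..n'} - D. (?c + 1) * (n - n')) \<le> (\<Sum>j\<in>{1..n'}. (?c + 1) * (n - n'))"
          by (intro sum_mono2) auto
        also have "\<dots> = n' * ((?c + 1) * (n - n'))" by simp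
        also have "\<dots> \<le> n' * ((?c + 1) * n)" by (intro mult_left_mono) auto
        finally show ?thesis .
      qed
      have sumr: "real (\<Sum>j\<in>{1..n'} - D. (?c + 1) * (n - n')) \<le> real n' * (real ?c + 1) * real n"
      proof -
        have "real (\<Sum>j\<in>{1..n'} - D. (?c + 1) * (n - n')) \<le> real (n' * ((?c + 1) * n))"
          using sum by (simp only: of_nat_le_iff)
        then show ?thesis by (simp add: algebra_simps)
      qed
      have ex: "real n' * (real ?c + 1) * real n \<le> 5 * K0 * (real n * real l) + (2 * K0 * M + 2 * K0) * ?X"
      proof (rule arith_G(2))
        show "0 \<le> real n'" by simp
        show "real n' \<le> real n" using nn by simp
        show "real n' \<le> K0 * ?tt" by (rule n'K)
        show "?tt \<le> 5 * real (kval t)" by (rule tk)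
        show "real (kval t) \<ge> 1" using kval_pos[of t] by simp
        show "0 \<le> real ?c" by simp
        show "real ?c \<le> real l / real (kval t) + 2 * log 2 (real n' + 1) + 1" by (rule cval_upper)
        show "0 \<le> log 2 (real n' + 1)" by simp
        show "log 2 (real n' + 1) \<le> M * Lam t" unfolding M_def by (rule log_bound[OF K1 n'K])
        show "Lam t \<ge> 1" by (rule Lam_ge)
        show "0 \<le> real l" by simp
        show "K0 \<ge> 1" by (rule K1)
        show "?tt \<ge> 1" by simp
        show "M \<ge> 0" by (rule M0)
      qed
      have eqb: "cool_bits F C0 BA n t l w D A = core_bits F BA n' t l w D' A + (\<Sum>j\<in>{1..n'} - D. (?c + 1) * (n - n'))"
        unfolding cool_bits_def Let_def using False by (simp only: n'_def[symmetric] D'_def[symmetric] if_False)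
      have tot: "real (cool_bits F C0 BA n t l w D A) \<le> 20 * K0 * (real n * real l) + (8 * K0 * M + 8 * K0 + Cp) * ?X"
        using cb sumr ex unfolding eqb by (simp add: algebra_simps)
      also have "\<dots> \<le> C1 * (real n * real l) + C1 * ?X"
      proof -
        have a: "20 * K0 * (real n * real l) \<le> C1 * (real n * real l)"
          unfolding C1_def using K1 M0 Cp0 by (intro mult_right_mono) auto
        have X0: "?X \<ge> 0" using Lam_ge[of t] by simp
        have b: "(8 * K0 * M + 8 * K0 + Cp) * ?X \<le> C1 * ?X"
          unfolding C1_def using K1 M0 Cp0 X0 by (intro mult_right_mono) auto
        show ?thesis using a b by linarith
      qed
      finally show ?thesis .
    qed
    have bits: "real (cool_bits F C0 BA n t l w D A) \<le> C * ?Phi"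
    proof -
      have "C1 * (real n * real l) + C1 * ?X \<le> C1 * ?Phi + C1 * ?Phi"
        using phi1 C10 by (intro add_mono mult_left_mono) auto
      also have "\<dots> = (2 * C1) * ?Phi" by simp
      also have "\<dots> \<le> C * ?Phi"
      proof -
        have "?Phi \<ge> 0" by (simp add: le_max_iff_disj)
        then show ?thesis unfolding C_def using Cp0 by (intro mult_right_mono) auto
      qed
      finally show ?thesis using bits0 by linarith
    qed
    show "(\<forall>i\<in>{1..n} - D. \<forall>j\<in>{1..n} - D.
          cool_out F C0 BA n t l w D A i = cool_out F C0 BA n t l w D A j) \<and>
       (\<forall>m. (\<forall>i\<in>{1..n} - D. w i = m) \<longrightarrow>
          (\<forall>i\<in>{1..n} - D. cool_out F C0 BA n t l w D A i = Some m)) \<and>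
       real (cool_rounds F C0 BA n t l w D A) \<le> C * ?tt \<and>
       real (cool_bits F C0 BA n t l w D A) \<le> C * ?Phi"
      using corr rounds bits by blast
  qed
qed


end
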